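(* Assume the vertex degrees of $G$ are uniformly bounded, $q:=\max_vq(v)$, and let $\theta\in(0,1)$. For every $n\ge1$ the operator norm of $\mathcal T^n$ on $\mathrm{Lip}_\theta$ equals $R_n$, both when $\mathrm{Lip}_\theta$ carries $\|\cdot\|_\theta$ and when it carries $\|\cdot\|_\infty$. Consequently the spectral radius of $\mathcal T$ on $(\mathrm{Lip}_\theta,\|\cdot\|_\theta)$ is $\rho=\lim_{n\to\infty}R_n^{1/n}\le q$. Moreover, for every $\varepsilon>0$ there is $N$ such that for all $n\ge N$ and all $f\in\mathrm{Lip}_\theta$, $$\|\mathcal T^nf\|_\theta\le(\rho+\varepsilon)^n\big(\theta^n\,\mathrm L_1(f)+\|f\|_\infty\big).$$
   Context: $G$ is a connected, locally finite graph (no loops, no multiple edges, every vertex of degree $\ge2$); $\deg v=1+q(v)$. $E$ oriented edges, $\iota,\tau$, $\bar e$ as usual; turn $e\rightsquigarrow e'$ iff $\tau(e)=\iota(e')$, $e'\ne\bar e$. $P$ = infinite paths $(e_1,e_2,\dots)$ with $e_i\rightsquigarrow e_{i+1}$; $(\mathcal Tf)(e_1,e_2,\dots)=\sum_{e_0\rightsquigarrow e_1}f(e_0,e_1,\dots)$. For $e\in E$ and $n\ge1$, $N_n(e)$ is the number of paths $(e_{-n},\dots,e_{-1},e_0)$ with $e_{i}\rightsquigarrow e_{i+1}$ and $e_0=e$; $R_n:=\sup_{e\in E}N_n(e)$. $d_\theta(p,p')=\theta^{k-1}$, $k=\min\{i:e_i\ne e'_i\}$; $\mathrm{Lip}_\theta$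 = bounded $f:P\to\mathbb C$ uniformly $d_\theta$-Lipschitz on each island $\{p:\iota(e_1)=v\}$; $\mathrm L_1(f)$ = optimal Lipschitz constant over pairs of paths with the same first edge; $\|f\|_\theta=\mathrm L_1(f)+\|f\|_\infty$. *)

theory Defs
  imports "HOL-Analysis.Analysis"
begin

text \<open>The graph G has vertex set the whole type 'v and (undirected) adjacency relation adj.
Oriented edges are pairs (u,w) with adj u w; iota = fst, tau = snd, reverse of (u,w) is (w,u).
An infinite path (e_1,e_2,...) is a map p :: nat => edge, with e_(i+1) = p i.\<close>

type_synonym 'v edge = "'v \<times> 'v"
type_synonym 'v path = "nat \<Rightarrow> 'v \<times> 'v"

definition graph_ok :: "('v \<Rightarrow> 'v \<Rightarrow> bool) \<Rightarrow> bool" where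
  "graph_ok adj \<longleftrightarrow>
     (\<forall>u w. adj u w \<longrightarrow> adj w u) \<and> (\<forall>v. \<not> adj v v) \<and>
     (\<forall>v. finite {w. adj v w}) \<and> (\<forall>u w. adj\<^sup>*\<^sup>* u w)"

definition deg :: "('v \<Rightarrow> 'v \<Rightarrow> bool) \<Rightarrow> 'v \<Rightarrow> nat" where
  "deg adj v = card {w. adj v w}"

definition qmax :: "('v \<Rightarrow> 'v \<Rightarrow> bool) \<Rightarrow> nat" where
  "qmax adj = Max (range (\<lambda>v. deg adj v - 1))"

definition edges :: "('v \<Rightarrow> 'v \<Rightarrow> bool) \<Rightarrow> 'v edge set" where
  "edges adj = {(u, w). adj u w}"

definition turn :: "'v edge \<Rightarrow> 'v edge \<Rightarrow> bool" where
  "turn e e' \<longleftrightarrow> snd e = fst e' \<and> e' \<noteq> (snd e, fst e)"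

definition paths :: "('v \<Rightarrow> 'v \<Rightarrow> bool) \<Rightarrow> 'v path set" where
  "paths adj = {p. (\<forall>i. p i \<in> edges adj) \<and> (\<forall>i. turn (p i) (p (Suc i)))}"

definition Tr :: "('v \<Rightarrow> 'v \<Rightarrow> bool) \<Rightarrow> ('v path \<Rightarrow> complex) \<Rightarrow> ('v path \<Rightarrow> complex)" where
  "Tr adj f = (\<lambda>p. \<Sum>e0 \<in> {e0 \<in> edges adj. turn e0 (p 0)}. f (case_nat e0 p))"

text \<open>N_n(e): number of paths (e_-n,...,e_0) with e_0 = e, encoded as lists of length n+1.\<close>
definition Ncount :: "('v \<Rightarrow> 'v \<Rightarrow> bool) \<Rightarrow> nat \<Rightarrow> 'v edge \<Rightarrow> nat" where
  "Ncount adj n e = card {xs. length xs = Suc n \<and> last xs = e \<and> set xs \<subseteq> edges adj \<and>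
                              (\<forall>i<n. turn (xs ! i) (xs ! Suc i))}"

definition Rn :: "('v \<Rightarrow> 'v \<Rightarrow> bool) \<Rightarrow> nat \<Rightarrow> nat" where
  "Rn adj n = (SUP e \<in> edges adj. Ncount adj n e)"

text \<open>d_theta(p,p') = theta^(k-1), k the first (1-based) index where the edges differ;
with 0-based indexing this is theta^(LEAST i. p i \<noteq> p' i).\<close>
definition dtheta :: "real \<Rightarrow> 'v path \<Rightarrow> 'v path \<Rightarrow> real" where
  "dtheta \<theta> p p' = (if p = p' then 0 else \<theta> ^ (LEAST i. p i \<noteq> p' i))"

definition Lip :: "('v \<Rightarrow> 'v \<Rightarrow> bool) \<Rightarrow> real \<Rightarrow> ('v path \<Rightarrow> complex) set" where
  "Lip adj \<theta> = {f. (\<exists>B. \<forall>p \<in> paths adj. norm (f p) \<le> B) \<and>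
       (\<exists>C. \<forall>p \<in> paths adj. \<forall>p' \<in> paths adj. fst (p 0) = fst (p' 0) \<longrightarrow>
              norm (f p - f p') \<le> C * dtheta \<theta> p p')}"

definition supnorm :: "('v \<Rightarrow> 'v \<Rightarrow> bool) \<Rightarrow> ('v path \<Rightarrow> complex) \<Rightarrow> real" where
  "supnorm adj f = (SUP p \<in> paths adj. norm (f p))"

definition L1 :: "('v \<Rightarrow> 'v \<Rightarrow> bool) \<Rightarrow> real \<Rightarrow> ('v path \<Rightarrow> complex) \<Rightarrow> real" where
  "L1 adj \<theta> f = Inf {C. 0 \<le> C \<and> (\<forall>p \<in> paths adj. \<forall>p' \<in> paths adj. p 0 = p' 0 \<longrightarrow>
              norm (f p - f p') \<le> C * dtheta \<theta> p p')}"

definition thnorm :: "('v \<Rightarrow> 'v \<Rightarrow> bool) \<Rightarrow> real \<Rightarrow> ('v path \<Rightarrow> complex) \<Rightarrow> real" where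
  "thnorm adj \<theta> f = L1 adj \<theta> f + supnorm adj f"

text \<open>Operator norm of A on the function space X with (semi)norm nrm
(functions are identified when they agree on paths, i.e. when nrm f = 0).\<close>
definition opnorm_on :: "('a \<Rightarrow> complex) set \<Rightarrow> (('a \<Rightarrow> complex) \<Rightarrow> real) \<Rightarrow>
     (('a \<Rightarrow> complex) \<Rightarrow> ('a \<Rightarrow> complex)) \<Rightarrow> real" where
  "opnorm_on X nrm A = Sup {nrm (A f) / nrm f | f. f \<in> X \<and> nrm f \<noteq> 0}"

text \<open>Spectrum of T on Lip_theta (elements identified when equal on paths):
lambda is in the spectrum iff lambda - T is not bijective on Lip_theta
(by the bounded inverse theorem, bijectivity on the Banach space suffices).\<close>
definition spectrum_Lip :: "('v \<Rightarrow> 'v \<Rightarrow> bool) \<Rightarrow> real \<Rightarrow> complex set" where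
  "spectrum_Lip adj \<theta> = {z. \<not> (
      (\<forall>f \<in> Lip adj \<theta>. (\<forall>p \<in> paths adj. z * f p - Tr adj f p = 0) \<longrightarrow> (\<forall>p \<in> paths adj. f p = 0)) \<and>
      (\<forall>g \<in> Lip adj \<theta>. \<exists>f \<in> Lip adj \<theta>. \<forall>p \<in> paths adj. z * f p - Tr adj f p = g p))}"

definition spectral_radius_Lip :: "('v \<Rightarrow> 'v \<Rightarrow> bool) \<Rightarrow> real \<Rightarrow> real" where
  "spectral_radius_Lip adj \<theta> = Sup (norm ` spectrum_Lip adj \<theta>)"

end

theory Submission
  imports Defs
begin


fun Nn :: "('v \<Rightarrow> 'v \<Rightarrow> bool) \<Rightarrow> nat \<Rightarrow> 'v edge \<Rightarrow> nat" where
  "Nn adj 0 e = 1"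
| "Nn adj (Suc n) e = (\<Sum>e0\<in>{e0 \<in> edges adj. turn e0 e}. Nn adj n e0)"

locale grph =
  fixes adj :: "'v \<Rightarrow> 'v \<Rightarrow> bool"
  assumes ok: "graph_ok adj" and deg2: "\<forall>v. deg adj v \<ge> 2" and degb: "\<exists>D. \<forall>v. deg adj v \<le> D"
begin

definition pred :: "'v edge \<Rightarrow> 'v edge set" where
  "pred e = {e0 \<in> edges adj. turn e0 e}"

lemma sym: "adj u w \<Longrightarrow> adj w u" using ok unfolding graph_ok_def by blast
lemma irrefl: "\<not> adj v v" using ok unfolding graph_ok_def by blast
lemma fin_nb: "finite {w. adj v w}" using ok unfolding graph_ok_def by blast

lemma two_nb: "\<exists>x. adj v x \<and> x \<noteq> w"
proof -
  have "card {w. adj v w} \<ge> 2" using deg2 unfolding deg_def by auto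
  hence "\<not> {w. adj v w} \<subseteq> {w}" using card_mono[of "{w}" "{w. adj v w}"] by auto
  thus ?thesis by auto
qed

lemma pred_eq: "pred (u, w) = (\<lambda>x. (x, u)) ` ({x. adj u x} - {w})"
  unfolding pred_def edges_def turn_def
  by (auto intro: sym) (metis (mono_tags) Diff_iff image_eqI mem_Collect_eq singletonD sym)

lemma fin_pred: "finite (pred e)"
  using pred_eq[of "fst e" "snd e"] fin_nb by simp

lemma pred_ne: "e \<in> edges adj \<Longrightarrow> pred e \<noteq> {}"
  using pred_eq[of "fst e" "snd e"] two_nb[of "fst e" "snd e"] by auto

definition qq where "qq = qmax adj"

lemma deg_bound_fin: "finite (range (\<lambda>v. deg adj v - 1))"
proof -
  obtain D where "\<forall>v. deg adj v \<le> D" using degb by blast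
  hence "range (\<lambda>v. deg adj v - 1) \<subseteq> {..D}" by (auto intro: le_trans[OF diff_le_self])
  thus ?thesis using finite_subset by blast
qed

lemma card_pred: "e \<in> edges adj \<Longrightarrow> card (pred e) \<le> qq"
proof -
  assume ee: "e \<in> edges adj"
  obtain u w where e: "e = (u, w)" by fastforce
  have uw: "w \<in> {x. adj u x}" using ee unfolding e edges_def by auto
  have "card (pred e) \<le> card ({x. adj u x} - {w})"
    unfolding e pred_eq by (rule card_image_le) (simp add: fin_nb)
  also have "\<dots> \<le> deg adj u - 1"
    unfolding deg_def using uw by (simp add: card_Diff_singleton_if fin_nb)
  also have "\<dots> \<le> qq" unfolding qq_def qmax_def
    using deg_bound_fin by (intro Max_ge) auto
  finally show ?thesis .
qed

lemma qq_ge1: "qq \<ge> 1"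
proof -
  obtain v :: 'v where True by blast
  have "2 \<le> deg adj v" using deg2 by blast
  hence "deg adj v - 1 \<ge> 1" by arith
  also have "deg adj v - 1 \<le> qq" unfolding qq_def qmax_def
    using deg_bound_fin by (intro Max_ge) auto
  finally show ?thesis .
qed

lemma edges_ne: "edges adj \<noteq> {}"
proof -
  obtain v :: 'v where True by blast
  obtain x where "adj v x" using two_nb by blast
  thus ?thesis unfolding edges_def by auto
qed

lemma succ_ex: "e \<in> edges adj \<Longrightarrow> \<exists>e'. e' \<in> edges adj \<and> turn e e'"
proof -
  assume "e \<in> edges adj"
  obtain x where "adj (snd e) x" "x \<noteq> fst e" using two_nb by blast
  thus ?thesis unfolding edges_def turn_def by (intro exI[of _ "(snd e, x)"]) auto
qed

definition succ where "succ e = (SOME e'. e' \<in> edges adj \<and> turn e e')"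

lemma succ: "e \<in> edges adj \<Longrightarrow> succ e \<in> edges adj \<and> turn e (succ e)"
  unfolding succ_def using succ_ex by (rule someI_ex)

definition mkpath where "mkpath e = (\<lambda>i. (succ ^^ i) e)"

lemma mkpath: "e \<in> edges adj \<Longrightarrow> mkpath e \<in> paths adj \<and> mkpath e 0 = e"
proof -
  assume e: "e \<in> edges adj"
  have "\<forall>i. (succ ^^ i) e \<in> edges adj"
  proof
    fix i show "(succ ^^ i) e \<in> edges adj" by (induction i) (auto simp: e succ)
  qed
  thus ?thesis unfolding mkpath_def paths_def by (auto simp: succ)
qed

lemma paths_ne: "paths adj \<noteq> {}" using mkpath edges_ne by blast

lemma paths_edge: "p \<in> paths adj \<Longrightarrow> p i \<in> edges adj"
  unfolding paths_def by auto

lemma cons_path: "p \<in> paths adj \<Longrightarrow> e0 \<in> pred (p 0) \<Longrightarrow> case_nat e0 p \<in> paths adj"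
  unfolding paths_def pred_def
  by (auto split: nat.split)

lemma Tr_eq: "Tr adj f p = (\<Sum>e0\<in>pred (p 0). f (case_nat e0 p))"
  unfolding Tr_def pred_def by simp

end


declare Nn.simps(2)[simp del]

context grph begin

definition Lset where "Lset n e = {xs. length xs = Suc n \<and> last xs = e \<and> set xs \<subseteq> edges adj \<and>
                              (\<forall>i<n. turn (xs ! i) (xs ! Suc i))}"

lemma pred_sub: "pred e \<subseteq> edges adj" unfolding pred_def by auto

lemma Nn_Suc: "Nn adj (Suc n) e = (\<Sum>e0\<in>pred e. Nn adj n e0)"
  unfolding pred_def by (simp add: Nn.simps(2))

lemma L0: "e \<in> edges adj \<Longrightarrow> Lset 0 e = {[e]}"
  unfolding Lset_def by (auto simp: length_Suc_conv)

lemma L_Suc: "e \<in> edges adj \<Longrightarrow> Lset (Suc n) e = (\<Union>e0\<in>pred e. (\<lambda>ys. ys @ [e]) ` Lset n e0)"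
proof (intro equalityI subsetI)
  fix xs assume "xs \<in> Lset (Suc n) e"
  then have len: "length xs = Suc (Suc n)" and l: "last xs = e" and s: "set xs \<subseteq> edges adj"
    and t: "\<forall>i<Suc n. turn (xs!i) (xs!Suc i)" unfolding Lset_def by auto
  define ys where "ys = butlast xs"
  have xs: "xs = ys @ [e]" using len l unfolding ys_def
    by (metis append_butlast_last_id list.size(3) nat.distinct(1))
  have lys: "length ys = Suc n" using len xs by simp
  have nth: "\<And>i. i < Suc n \<Longrightarrow> ys!i = xs!i" by (simp add: xs nth_append lys)
  have "last ys = ys ! n" using lys by (metis diff_Suc_1 last_conv_nth list.size(3) nat.distinct(1))
  hence lasty: "last ys = xs ! n" using nth[of n] by simp
  have xsn: "xs ! Suc n = e" using xs lys by (simp add: nth_append)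
  have "xs ! n \<in> set xs" using len by (intro nth_mem) simp
  hence e0p: "last ys \<in> pred e" unfolding pred_def using t lasty xsn s len
    by auto
  have "ys \<in> Lset n (last ys)" unfolding Lset_def using lys s t nth xs by auto
  thus "xs \<in> (\<Union>e0\<in>pred e. (\<lambda>ys. ys @ [e]) ` Lset n e0)" using e0p xs by blast
next
  fix xs assume ee: "e \<in> edges adj" and "xs \<in> (\<Union>e0\<in>pred e. (\<lambda>ys. ys @ [e]) ` Lset n e0)"
  then obtain e0 ys where e0: "e0 \<in> pred e" and ys: "ys \<in> Lset n e0" and xs: "xs = ys @ [e]" by auto
  have lys: "length ys = Suc n" and ly: "last ys = e0" and sy: "set ys \<subseteq> edges adj"
    and ty: "\<forall>i<n. turn (ys!i) (ys!Suc i)" using ys unfolding Lset_def by auto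
  have yn: "ys ! n = e0" using ly lys by (metis diff_Suc_1 last_conv_nth list.size(3) nat.distinct(1))
  have "turn (xs!i) (xs!Suc i)" if "i < Suc n" for i
  proof (cases "i < n")
    case True thus ?thesis using ty lys by (simp add: xs nth_append)
  next
    case False hence "i = n" using that by simp
    thus ?thesis using yn e0 lys unfolding pred_def by (simp add: xs nth_append)
  qed
  thus "xs \<in> Lset (Suc n) e" unfolding Lset_def using lys sy ee xs by auto
qed

lemma L_card: "e \<in> edges adj \<Longrightarrow> finite (Lset n e) \<and> card (Lset n e) = Nn adj n e"
proof (induction n arbitrary: e)
  case 0 thus ?case by (simp add: L0)
next
  case (Suc n)
  have fin: "\<And>e0. e0 \<in> pred e \<Longrightarrow> finite (Lset n e0)" using Suc.IH pred_sub by blast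
  have inj: "inj (\<lambda>ys. ys @ [e])" by (simp add: inj_def)
  have "card (Lset (Suc n) e) = (\<Sum>e0\<in>pred e. card ((\<lambda>ys. ys @ [e]) ` Lset n e0))"
    unfolding L_Suc[OF Suc.prems]
  proof (rule card_UN_disjoint)
    show "finite (pred e)" by (rule fin_pred)
    show "\<forall>i\<in>pred e. finite ((\<lambda>ys. ys @ [e]) ` Lset n i)" using fin by blast
    show "\<forall>i\<in>pred e. \<forall>j\<in>pred e. i \<noteq> j \<longrightarrow> (\<lambda>ys. ys @ [e]) ` Lset n i \<inter> (\<lambda>ys. ys @ [e]) ` Lset n j = {}"
      unfolding Lset_def by auto
  qed
  also have "\<dots> = (\<Sum>e0\<in>pred e. Nn adj n e0)"
  proof (intro sum.cong refl)
    fix e0 assume "e0 \<in> pred e"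
    hence "card (Lset n e0) = Nn adj n e0" using Suc.IH pred_sub by blast
    thus "card ((\<lambda>ys. ys @ [e]) ` Lset n e0) = Nn adj n e0"
      by (simp add: card_image inj_on_def)
  qed
  finally show ?case using fin fin_pred by (simp add: Nn_Suc L_Suc[OF Suc.prems])
qed

lemma Ncount_eq: "e \<in> edges adj \<Longrightarrow> Ncount adj n e = Nn adj n e"
  using L_card unfolding Ncount_def Lset_def by simp

lemma Nn_ge1: "e \<in> edges adj \<Longrightarrow> Nn adj n e \<ge> 1"
proof (induction n arbitrary: e)
  case 0 thus ?case by simp
next
  case (Suc n)
  obtain e0 where "e0 \<in> pred e" using pred_ne Suc.prems by blast
  hence "Nn adj n e0 \<le> (\<Sum>e0\<in>pred e. Nn adj n e0)"
    by (intro member_le_sum fin_pred) auto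
  moreover have "Nn adj n e0 \<ge> 1" using Suc.IH \<open>e0 \<in> pred e\<close> pred_sub by blast
  ultimately show ?case by (simp add: Nn_Suc)
qed

lemma Nn_le: "e \<in> edges adj \<Longrightarrow> Nn adj n e \<le> qq ^ n"
proof (induction n arbitrary: e)
  case 0 thus ?case by simp
next
  case (Suc n)
  have "(\<Sum>e0\<in>pred e. Nn adj n e0) \<le> (\<Sum>e0\<in>pred e. qq ^ n)"
    using Suc.IH pred_sub by (intro sum_mono) blast
  also have "\<dots> = card (pred e) * qq ^ n" by simp
  also have "\<dots> \<le> qq * qq ^ n" using card_pred[OF Suc.prems] by simp
  finally show ?case by (simp add: Nn_Suc)
qed

lemma Rn_bdd: "bdd_above ((Nn adj n) ` edges adj)"
  using Nn_le by (intro bdd_aboveI) auto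

lemma Rn_eq: "Rn adj n = (SUP e\<in>edges adj. Nn adj n e)"
  unfolding Rn_def using Ncount_eq by (intro SUP_cong) auto

lemma Nn_le_Rn: "e \<in> edges adj \<Longrightarrow> Nn adj n e \<le> Rn adj n"
  unfolding Rn_eq using Rn_bdd by (intro cSUP_upper) auto

lemma Rn_attained: "\<exists>e\<in>edges adj. Rn adj n = Nn adj n e"
proof -
  have fin: "finite ((Nn adj n) ` edges adj)"
  proof (rule finite_subset)
    show "(Nn adj n) ` edges adj \<subseteq> {..qq^n}" using Nn_le by auto
  qed simp
  have "Sup ((Nn adj n) ` edges adj) \<in> (Nn adj n) ` edges adj"
    using fin edges_ne by (simp add: cSup_eq_Max Max_in)
  thus ?thesis unfolding Rn_eq by auto
qed

lemma Rn_ge1: "Rn adj n \<ge> 1"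
  using Rn_attained Nn_ge1 by metis

lemma Rn_le: "Rn adj n \<le> qq ^ n"
  using Rn_attained Nn_le by metis

lemma Nn_add: "e \<in> edges adj \<Longrightarrow> Nn adj (m + n) e \<le> Nn adj m e * Rn adj n"
proof (induction m arbitrary: e)
  case 0 thus ?case using Nn_le_Rn by simp
next
  case (Suc m)
  have "Nn adj (Suc m + n) e = (\<Sum>e0\<in>pred e. Nn adj (m + n) e0)" by (simp add: Nn_Suc)
  also have "\<dots> \<le> (\<Sum>e0\<in>pred e. Nn adj m e0 * Rn adj n)"
    using Suc.IH pred_sub by (intro sum_mono) blast
  also have "\<dots> = Nn adj (Suc m) e * Rn adj n" by (simp add: Nn_Suc sum_distrib_right)
  finally show ?case .
qed

lemma Rn_submult: "Rn adj (m + n) \<le> Rn adj m * Rn adj n"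
proof -
  obtain e where e: "e \<in> edges adj" "Rn adj (m + n) = Nn adj (m + n) e" using Rn_attained by blast
  have "Nn adj (m + n) e \<le> Nn adj m e * Rn adj n" by (rule Nn_add[OF e(1)])
  also have "\<dots> \<le> Rn adj m * Rn adj n" using Nn_le_Rn[OF e(1)] by simp
  finally show ?thesis using e by simp
qed

end


locale grth = grph adj for adj :: "'v \<Rightarrow> 'v \<Rightarrow> bool" +
  fixes \<theta> :: real
  assumes th0: "0 < \<theta>" and th1: "\<theta> < 1"
begin

abbreviation "P \<equiv> paths adj"
abbreviation "d \<equiv> dtheta \<theta>"

lemma d_self[simp]: "d p p = 0" unfolding dtheta_def by simp
lemma d_nonneg: "d p p' \<ge> 0" unfolding dtheta_def using th0 by simp
lemma d_le1: "d p p' \<le> 1" unfolding dtheta_def using th0 th1 by (simp add: power_le_one)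
lemma d_pos: "p \<noteq> p' \<Longrightarrow> d p p' > 0" unfolding dtheta_def using th0 by simp
lemma d_first: "p 0 \<noteq> p' 0 \<Longrightarrow> d p p' = 1"
  unfolding dtheta_def by (auto intro!: Least_eq_0)
lemma d_cons: "d (case_nat e p) (case_nat e p') = \<theta> * d p p'"
proof (cases "p = p'")
  case True thus ?thesis by simp
next
  case False
  hence ne: "case_nat e p \<noteq> case_nat e p'"
    by (metis nat.case(2) ext)
  have "(LEAST i. case_nat e p i \<noteq> case_nat e p' i) = Suc (LEAST i. p i \<noteq> p' i)"
  proof -
    obtain j where "p j \<noteq> p' j" using False by blast
    hence "case_nat e p (Suc j) \<noteq> case_nat e p' (Suc j)" by simp
    thus ?thesis by (subst Least_Suc[where n="Suc j"]) auto
  qed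
  thus ?thesis using False ne unfolding dtheta_def by simp
qed

definition bnd :: "('v path \<Rightarrow> complex) \<Rightarrow> bool" where
  "bnd f \<longleftrightarrow> (\<exists>B. \<forall>p\<in>P. norm (f p) \<le> B)"

definition valid :: "real \<Rightarrow> ('v path \<Rightarrow> complex) \<Rightarrow> bool" where
  "valid C f \<longleftrightarrow> 0 \<le> C \<and> (\<forall>p\<in>P. \<forall>p'\<in>P. p 0 = p' 0 \<longrightarrow> norm (f p - f p') \<le> C * d p p')"

definition lipc where "lipc f \<longleftrightarrow> (\<exists>C. valid C f)"

lemma L1_def': "L1 adj \<theta> f = Inf {C. valid C f}"
  unfolding L1_def valid_def by simp

lemma supnorm_ge: "bnd f \<Longrightarrow> p \<in> P \<Longrightarrow> norm (f p) \<le> supnorm adj f"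
proof -
  assume "bnd f" "p \<in> P"
  then obtain B where B: "\<forall>p\<in>P. norm (f p) \<le> B" unfolding bnd_def by blast
  have "bdd_above ((\<lambda>p. norm (f p)) ` P)" by (rule bdd_aboveI[of _ B]) (use B in auto)
  thus ?thesis unfolding supnorm_def using \<open>p \<in> P\<close> by (intro cSUP_upper)
qed

lemma supnorm_le: "(\<And>p. p \<in> P \<Longrightarrow> norm (f p) \<le> B) \<Longrightarrow> supnorm adj f \<le> B"
  unfolding supnorm_def using paths_ne by (intro cSUP_least) auto

lemma supnorm_nonneg: "bnd f \<Longrightarrow> supnorm adj f \<ge> 0"
  using paths_ne supnorm_ge[of f] by (meson all_not_in_conv norm_ge_zero order_trans)

lemma bndI: "(\<And>p. p \<in> P \<Longrightarrow> norm (f p) \<le> B) \<Longrightarrow> bnd f"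
  unfolding bnd_def by blast

lemma L1_le: "valid C f \<Longrightarrow> L1 adj \<theta> f \<le> C"
  unfolding L1_def' by (intro cInf_lower bdd_belowI[of _ 0]) (auto simp: valid_def)

lemma L1_nonneg: "lipc f \<Longrightarrow> L1 adj \<theta> f \<ge> 0"
  unfolding L1_def' lipc_def by (intro cInf_greatest) (auto simp: valid_def)

lemma L1_valid: "lipc f \<Longrightarrow> valid (L1 adj \<theta> f) f"
proof -
  assume l: "lipc f"
  have "norm (f p - f p') \<le> L1 adj \<theta> f * d p p'" if "p \<in> P" "p' \<in> P" "p 0 = p' 0" for p p'
  proof (cases "p = p'")
    case True thus ?thesis by simp
  next
    case False
    have dp: "d p p' > 0" by (rule d_pos[OF False])
    have "norm (f p - f p') / d p p' \<le> L1 adj \<theta> f" unfolding L1_def'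
    proof (rule cInf_greatest)
      show "{C. valid C f} \<noteq> {}" using l unfolding lipc_def by auto
      fix C assume "C \<in> {C. valid C f}"
      thus "norm (f p - f p') / d p p' \<le> C" using that dp by (auto simp: valid_def divide_le_eq)
    qed
    thus ?thesis using dp by (simp add: divide_le_eq)
  qed
  thus ?thesis unfolding valid_def using L1_nonneg[OF l] by blast
qed

lemma L1_lip: "lipc f \<Longrightarrow> p \<in> P \<Longrightarrow> p' \<in> P \<Longrightarrow> p 0 = p' 0 \<Longrightarrow> norm (f p - f p') \<le> L1 adj \<theta> f * d p p'"
  using L1_valid unfolding valid_def by blast

lemma Lip_iff: "f \<in> Lip adj \<theta> \<longleftrightarrow> bnd f \<and> lipc f"
proof
  assume "f \<in> Lip adj \<theta>"
  then obtain B C where B: "\<forall>p\<in>P. norm (f p) \<le> B" and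
    C: "\<forall>p\<in>P. \<forall>p'\<in>P. fst (p 0) = fst (p' 0) \<longrightarrow> norm (f p - f p') \<le> C * d p p'"
    unfolding Lip_def by blast
  have "valid (max C 0) f" unfolding valid_def
  proof (intro conjI ballI impI)
    fix p p' assume "p \<in> P" "p' \<in> P" "p 0 = p' 0"
    hence "norm (f p - f p') \<le> C * d p p'" using C by auto
    also have "\<dots> \<le> max C 0 * d p p'" using d_nonneg by (intro mult_right_mono) auto
    finally show "norm (f p - f p') \<le> max C 0 * d p p'" .
  qed auto
  thus "bnd f \<and> lipc f" using B unfolding bnd_def lipc_def by blast
next
  assume "bnd f \<and> lipc f"
  then obtain B C where B: "\<forall>p\<in>P. norm (f p) \<le> B" and C: "valid C f"
    unfolding bnd_def lipc_def by blast
  have B0: "B \<ge> 0" using B paths_ne by (meson all_not_in_conv norm_ge_zero order_trans)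
  have "norm (f p - f p') \<le> (C + 2 * B) * d p p'" if "p \<in> P" "p' \<in> P" for p p'
  proof (cases "p 0 = p' 0")
    case True
    hence "norm (f p - f p') \<le> C * d p p'" using C that unfolding valid_def by blast
    also have "\<dots> \<le> (C + 2 * B) * d p p'" using B0 d_nonneg by (intro mult_right_mono) auto
    finally show ?thesis .
  next
    case False
    have "norm (f p - f p') \<le> norm (f p) + norm (f p')" by (rule norm_triangle_ineq4)
    also have "\<dots> \<le> 2 * B" using B that by (smt (verit))
    also have "\<dots> \<le> (C + 2 * B)" using C unfolding valid_def by simp
    finally show ?thesis using d_first[of p p'] False by simp
  qed
  thus "f \<in> Lip adj \<theta>" unfolding Lip_def using B by blast
qed

lemma valid_add: "valid C f \<Longrightarrow> valid C' g \<Longrightarrow> valid (C + C') (\<lambda>p. f p + g p)"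
  unfolding valid_def
proof (intro conjI ballI impI, simp)
  fix p p' assume a: "0 \<le> C \<and> (\<forall>p\<in>P. \<forall>p'\<in>P. p 0 = p' 0 \<longrightarrow> norm (f p - f p') \<le> C * d p p')"
    "0 \<le> C' \<and> (\<forall>p\<in>P. \<forall>p'\<in>P. p 0 = p' 0 \<longrightarrow> norm (g p - g p') \<le> C' * d p p')"
    "p \<in> P" "p' \<in> P" "p 0 = p' 0"
  have "norm (f p + g p - (f p' + g p')) \<le> norm (f p - f p') + norm (g p - g p')"
    by (metis (no_types, lifting) add_diff_add norm_triangle_ineq)
  also have "\<dots> \<le> C * d p p' + C' * d p p'" using a by (intro add_mono) auto
  finally show "norm (f p + g p - (f p' + g p')) \<le> (C + C') * d p p'" by (simp add: algebra_simps)
qed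

lemma valid_scale: "valid C f \<Longrightarrow> valid (norm c * C) (\<lambda>p. c * f p)"
  unfolding valid_def
proof (intro conjI ballI impI, simp)
  fix p p' assume a: "0 \<le> C \<and> (\<forall>p\<in>P. \<forall>p'\<in>P. p 0 = p' 0 \<longrightarrow> norm (f p - f p') \<le> C * d p p')"
    "p \<in> P" "p' \<in> P" "p 0 = p' 0"
  have "norm (c * f p - c * f p') = norm c * norm (f p - f p')"
    by (metis norm_mult right_diff_distrib)
  also have "\<dots> \<le> norm c * (C * d p p')" using a by (intro mult_left_mono) auto
  finally show "norm (c * f p - c * f p') \<le> norm c * C * d p p'" by simp
qed

lemma lipc_add: "lipc f \<Longrightarrow> lipc g \<Longrightarrow> lipc (\<lambda>p. f p + g p)"
  unfolding lipc_def using valid_add by blast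
lemma lipc_scale: "lipc f \<Longrightarrow> lipc (\<lambda>p. c * f p)"
  unfolding lipc_def using valid_scale by blast
lemma bnd_add: "bnd f \<Longrightarrow> bnd g \<Longrightarrow> bnd (\<lambda>p. f p + g p)"
  unfolding bnd_def by (meson add_mono norm_triangle_le)
lemma bnd_scale: "bnd f \<Longrightarrow> bnd (\<lambda>p. c * f p)"
  unfolding bnd_def by (metis mult_left_mono norm_ge_zero norm_mult)

lemma Lip_add: "f \<in> Lip adj \<theta> \<Longrightarrow> g \<in> Lip adj \<theta> \<Longrightarrow> (\<lambda>p. f p + g p) \<in> Lip adj \<theta>"
  by (simp add: Lip_iff bnd_add lipc_add)
lemma Lip_scale: "f \<in> Lip adj \<theta> \<Longrightarrow> (\<lambda>p. c * f p) \<in> Lip adj \<theta>"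
  by (simp add: Lip_iff bnd_scale lipc_scale)
lemma Lip_diff: "f \<in> Lip adj \<theta> \<Longrightarrow> g \<in> Lip adj \<theta> \<Longrightarrow> (\<lambda>p. f p - g p) \<in> Lip adj \<theta>"
  using Lip_add[of f "\<lambda>p. (-1) * g p"] Lip_scale[of g "-1"] by simp

lemma supnorm_add: "bnd f \<Longrightarrow> bnd g \<Longrightarrow> supnorm adj (\<lambda>p. f p + g p) \<le> supnorm adj f + supnorm adj g"
  by (intro supnorm_le) (meson add_mono norm_triangle_le supnorm_ge)
lemma supnorm_scale: "bnd f \<Longrightarrow> supnorm adj (\<lambda>p. c * f p) \<le> norm c * supnorm adj f"
  by (intro supnorm_le) (simp add: mult_left_mono norm_mult supnorm_ge)
lemma L1_add: "lipc f \<Longrightarrow> lipc g \<Longrightarrow> L1 adj \<theta> (\<lambda>p. f p + g p) \<le> L1 adj \<theta> f + L1 adj \<theta> g"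
  by (intro L1_le valid_add L1_valid)
lemma L1_scale: "lipc f \<Longrightarrow> L1 adj \<theta> (\<lambda>p. c * f p) \<le> norm c * L1 adj \<theta> f"
  by (intro L1_le valid_scale L1_valid)

lemma thnorm_add: "f \<in> Lip adj \<theta> \<Longrightarrow> g \<in> Lip adj \<theta> \<Longrightarrow>
   thnorm adj \<theta> (\<lambda>p. f p + g p) \<le> thnorm adj \<theta> f + thnorm adj \<theta> g"
  unfolding thnorm_def Lip_iff using L1_add supnorm_add by fastforce
lemma thnorm_scale_le: "f \<in> Lip adj \<theta> \<Longrightarrow> thnorm adj \<theta> (\<lambda>p. c * f p) \<le> norm c * thnorm adj \<theta> f"
proof -
  assume "f \<in> Lip adj \<theta>"
  hence b: "bnd f" and l: "lipc f" by (auto simp: Lip_iff)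
  show ?thesis unfolding thnorm_def distrib_left
    by (intro add_mono L1_scale supnorm_scale b l)
qed
lemma thnorm_scale: "f \<in> Lip adj \<theta> \<Longrightarrow> thnorm adj \<theta> (\<lambda>p. c * f p) = norm c * thnorm adj \<theta> f"
proof (cases "c = 0")
  case True
  have "supnorm adj (\<lambda>p. 0) = 0" unfolding supnorm_def using paths_ne by simp
  moreover have "L1 adj \<theta> (\<lambda>p. 0) = 0"
  proof -
    have v: "valid 0 (\<lambda>p. 0)" by (simp add: valid_def)
    show ?thesis using L1_le[OF v] L1_nonneg[of "\<lambda>p. 0"] v unfolding lipc_def by force
  qed
  ultimately show ?thesis using True by (simp add: thnorm_def)
next
  case False
  assume f: "f \<in> Lip adj \<theta>"
  have "(\<lambda>p. inverse c * (c * f p)) = f" using False by (simp add: fun_eq_iff)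
  hence "thnorm adj \<theta> f = thnorm adj \<theta> (\<lambda>p. inverse c * (c * f p))" by simp
  also have "\<dots> \<le> norm (inverse c) * thnorm adj \<theta> (\<lambda>p. c * f p)"
    by (intro thnorm_scale_le Lip_scale f)
  also have "\<dots> = thnorm adj \<theta> (\<lambda>p. c * f p) / norm c" by (simp add: norm_inverse divide_inverse_commute)
  finally have "norm c * thnorm adj \<theta> f \<le> thnorm adj \<theta> (\<lambda>p. c * f p)"
    using False by (simp add: field_simps)
  thus ?thesis using thnorm_scale_le[OF f, of c] by simp
qed

lemma supnorm_le_thnorm: "f \<in> Lip adj \<theta> \<Longrightarrow> supnorm adj f \<le> thnorm adj \<theta> f"
  unfolding thnorm_def Lip_iff using L1_nonneg by simp

lemma thnorm_nonneg: "f \<in> Lip adj \<theta> \<Longrightarrow> thnorm adj \<theta> f \<ge> 0"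
  unfolding thnorm_def Lip_iff using L1_nonneg supnorm_nonneg by simp

abbreviation "T \<equiv> Tr adj"

lemma Tpow_Suc: "(T ^^ Suc n) f = T ((T ^^ n) f)" by simp

lemma cons0: "case_nat e0 p 0 = e0" by simp

lemma T_cong: "(\<And>p. p \<in> P \<Longrightarrow> f p = g p) \<Longrightarrow> p \<in> P \<Longrightarrow> T f p = T g p"
  unfolding Tr_eq by (intro sum.cong refl) (auto intro: cons_path)

lemma Tpow_cong: "(\<And>p. p \<in> P \<Longrightarrow> f p = g p) \<Longrightarrow> p \<in> P \<Longrightarrow> (T ^^ n) f p = (T ^^ n) g p"
proof (induction n arbitrary: p)
  case 0 thus ?case by simp
next
  case (Suc n)
  have "\<And>q. q \<in> P \<Longrightarrow> (T^^n) f q = (T^^n) g q" using Suc.IH Suc.prems(1) by blast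
  thus ?case unfolding Tpow_Suc using Suc.prems(2) by (rule T_cong)
qed

lemma Tpow_bound: "(\<And>p. p \<in> P \<Longrightarrow> norm (f p) \<le> B) \<Longrightarrow> p \<in> P \<Longrightarrow>
   norm ((T ^^ n) f p) \<le> real (Nn adj n (p 0)) * B"
proof (induction n arbitrary: p)
  case 0 thus ?case by simp
next
  case (Suc n)
  have "norm ((T ^^ Suc n) f p) = norm (\<Sum>e0\<in>pred (p 0). (T ^^ n) f (case_nat e0 p))"
    by (simp add: Tr_eq)
  also have "\<dots> \<le> (\<Sum>e0\<in>pred (p 0). norm ((T ^^ n) f (case_nat e0 p)))" by (rule norm_sum)
  also have "\<dots> \<le> (\<Sum>e0\<in>pred (p 0). real (Nn adj n e0) * B)"
    using Suc.IH[OF Suc.prems(1)] cons_path[OF Suc.prems(2)] by (intro sum_mono) fastforce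
  also have "\<dots> = real (Nn adj (Suc n) (p 0)) * B" by (simp add: Nn_Suc sum_distrib_right)
  finally show ?case .
qed

lemma Tpow_lip: "valid C f \<Longrightarrow> p \<in> P \<Longrightarrow> p' \<in> P \<Longrightarrow> p 0 = p' 0 \<Longrightarrow>
   norm ((T ^^ n) f p - (T ^^ n) f p') \<le> real (Nn adj n (p 0)) * \<theta> ^ n * C * d p p'"
proof (induction n arbitrary: p p')
  case 0 thus ?case unfolding valid_def by simp
next
  case (Suc n)
  have "norm ((T ^^ Suc n) f p - (T ^^ Suc n) f p') =
     norm (\<Sum>e0\<in>pred (p 0). (T ^^ n) f (case_nat e0 p) - (T ^^ n) f (case_nat e0 p'))"
    using Suc.prems(4) by (simp add: Tr_eq sum_subtractf)
  also have "\<dots> \<le> (\<Sum>e0\<in>pred (p 0). norm ((T ^^ n) f (case_nat e0 p) - (T ^^ n) f (case_nat e0 p')))"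
    by (rule norm_sum)
  also have "\<dots> \<le> (\<Sum>e0\<in>pred (p 0). real (Nn adj n e0) * \<theta> ^ n * C * d (case_nat e0 p) (case_nat e0 p'))"
  proof (intro sum_mono)
    fix e0 assume e0: "e0 \<in> pred (p 0)"
    have "case_nat e0 p \<in> P" "case_nat e0 p' \<in> P" using e0 Suc.prems cons_path by auto
    thus "norm ((T ^^ n) f (case_nat e0 p) - (T ^^ n) f (case_nat e0 p')) \<le>
        real (Nn adj n e0) * \<theta> ^ n * C * d (case_nat e0 p) (case_nat e0 p')"
      using Suc.IH[OF Suc.prems(1)] by fastforce
  qed
  also have "\<dots> = (\<Sum>e0\<in>pred (p 0). real (Nn adj n e0) * (\<theta> ^ Suc n * C * d p p'))"
    by (intro sum.cong refl) (simp add: d_cons)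
  also have "\<dots> = (\<Sum>e0\<in>pred (p 0). real (Nn adj n e0)) * (\<theta> ^ Suc n * C * d p p')"
    by (simp add: sum_distrib_right)
  also have "\<dots> = real (Nn adj (Suc n) (p 0)) * \<theta> ^ Suc n * C * d p p'"
    by (simp add: Nn_Suc)
  finally show ?case .
qed

lemma Tpow_one: "p \<in> P \<Longrightarrow> (T ^^ n) (\<lambda>_. 1) p = of_nat (Nn adj n (p 0))"
proof (induction n arbitrary: p)
  case 0 thus ?case by simp
next
  case (Suc n)
  have "(T ^^ Suc n) (\<lambda>_. 1) p = (\<Sum>e0\<in>pred (p 0). (T ^^ n) (\<lambda>_. 1) (case_nat e0 p))"
    by (simp add: Tr_eq)
  also have "\<dots> = (\<Sum>e0\<in>pred (p 0). of_nat (Nn adj n e0))"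
    using Suc.IH cons_path[OF Suc.prems] by (intro sum.cong refl) fastforce
  finally show ?case by (simp add: Nn_Suc)
qed

lemma Nn_Rn_real: "p \<in> P \<Longrightarrow> real (Nn adj n (p 0)) \<le> real (Rn adj n)"
  using Nn_le_Rn paths_edge by simp

lemma Tpow_Lip: assumes f: "f \<in> Lip adj \<theta>"
  shows "(T ^^ n) f \<in> Lip adj \<theta>"
    and "supnorm adj ((T ^^ n) f) \<le> real (Rn adj n) * supnorm adj f"
    and "L1 adj \<theta> ((T ^^ n) f) \<le> real (Rn adj n) * \<theta> ^ n * L1 adj \<theta> f"
proof -
  have b: "bnd f" and l: "lipc f" using f Lip_iff by auto
  have s0: "supnorm adj f \<ge> 0" using supnorm_nonneg b .
  have bd: "norm ((T ^^ n) f p) \<le> real (Rn adj n) * supnorm adj f" if "p \<in> P" for p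
  proof -
    have "norm ((T ^^ n) f p) \<le> real (Nn adj n (p 0)) * supnorm adj f"
      using that by (intro Tpow_bound supnorm_ge b)
    also have "\<dots> \<le> real (Rn adj n) * supnorm adj f"
      using Nn_Rn_real[OF that] s0 by (intro mult_right_mono) auto
    finally show ?thesis .
  qed
  have v: "valid (real (Rn adj n) * \<theta> ^ n * L1 adj \<theta> f) ((T ^^ n) f)"
    unfolding valid_def
  proof (intro conjI ballI impI)
    show "0 \<le> real (Rn adj n) * \<theta> ^ n * L1 adj \<theta> f" using L1_nonneg[OF l] th0 by simp
    fix p p' assume pp: "p \<in> P" "p' \<in> P" "p 0 = p' 0"
    have "norm ((T ^^ n) f p - (T ^^ n) f p') \<le> real (Nn adj n (p 0)) * \<theta> ^ n * L1 adj \<theta> f * d p p'"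
      using pp by (intro Tpow_lip L1_valid l)
    also have "\<dots> \<le> real (Rn adj n) * \<theta> ^ n * L1 adj \<theta> f * d p p'"
      using Nn_Rn_real[OF pp(1)] L1_nonneg[OF l] th0 d_nonneg
      by (intro mult_right_mono) (auto intro: mult_right_mono)
    finally show "norm ((T ^^ n) f p - (T ^^ n) f p') \<le> real (Rn adj n) * \<theta> ^ n * L1 adj \<theta> f * d p p'" .
  qed
  have "bnd ((T ^^ n) f)" using bd by (rule bndI)
  thus "(T ^^ n) f \<in> Lip adj \<theta>" unfolding Lip_iff lipc_def using v by blast
  show "supnorm adj ((T ^^ n) f) \<le> real (Rn adj n) * supnorm adj f" using bd by (rule supnorm_le)
  show "L1 adj \<theta> ((T ^^ n) f) \<le> real (Rn adj n) * \<theta> ^ n * L1 adj \<theta> f" using v by (rule L1_le)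
qed

end


lemma fekete_decomp:
  fixes a :: "nat \<Rightarrow> real"
  assumes sub: "\<And>m n. a (m + n) \<le> a m + a n"
  shows "a (q * m + r) \<le> real q * a m + a r"
proof (induction q)
  case 0 thus ?case by simp
next
  case (Suc q)
  have "a (Suc q * m + r) = a (m + (q * m + r))" by (simp add: algebra_simps)
  also have "\<dots> \<le> a m + a (q * m + r)" by (rule sub)
  also have "\<dots> \<le> a m + (real q * a m + a r)" using Suc.IH by simp
  finally show ?case by (simp add: algebra_simps)
qed

lemma fekete:
  fixes a :: "nat \<Rightarrow> real"
  assumes nn: "\<And>n. a n \<ge> 0" and sub: "\<And>m n. a (m + n) \<le> a m + a n"
  shows "\<exists>L. (\<lambda>n. a n / real n) \<longlonglongrightarrow> L"
proof -
  define S where "S = (\<lambda>n. a n / real n) ` {1..}"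
  define L where "L = Inf S"
  have Sne: "S \<noteq> {}" unfolding S_def by auto
  have Sb: "bdd_below S" unfolding S_def using nn by (intro bdd_belowI[of _ 0]) auto
  have low: "L \<le> a n / real n" if "n \<ge> 1" for n
    unfolding L_def S_def using that Sb unfolding S_def by (intro cInf_lower) auto
  have "\<forall>r>0. \<exists>no. \<forall>n\<ge>no. norm (a n / real n - L) < r"
  proof (intro allI impI)
    fix r :: real assume r: "r > 0"
    have "Inf S < L + r / 2" using r unfolding L_def by simp
    then obtain m where m: "m \<ge> 1" "a m / real m < L + r / 2"
      using cInf_less_iff[OF Sne Sb] unfolding S_def by auto
    define Cm where "Cm = Max (a ` {..<m})"
    have Cm: "a k \<le> Cm" if "k < m" for k unfolding Cm_def using that by (intro Max_ge) auto
    have Cm0: "Cm \<ge> 0" using Cm[of 0] nn[of 0] m by simp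
    obtain no :: nat where no: "real no > 2 * Cm / r" using reals_Archimedean2 by blast
    have "norm (a n / real n - L) < r" if n: "n \<ge> max no 1" for n
    proof -
      have n1: "n \<ge> 1" and nno: "n \<ge> no" using n by auto
      have rn: "real n > 0" using n1 by simp
      have "n = (n div m) * m + n mod m" by simp
      hence "a n \<le> real (n div m) * a m + a (n mod m)"
        using fekete_decomp[of a "n div m" m "n mod m", OF sub] by simp
      also have "\<dots> \<le> (real n / real m) * a m + Cm"
        using m nn[of m] Cm[of "n mod m"]
        by (intro add_mono mult_right_mono of_nat_div_le_of_nat) auto
      finally have "a n / real n \<le> a m / real m + Cm / real n"
        using rn m by (simp add: field_simps)
      moreover have "Cm / real n < r / 2"
      proof -
        have "2 * Cm / r < real n" using no nno by linarith
        thus ?thesis using r rn by (simp add: field_simps)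
      qed
      ultimately have "a n / real n < L + r" using m by linarith
      thus ?thesis using low[OF n1] by simp
    qed
    thus "\<exists>no. \<forall>n\<ge>no. norm (a n / real n - L) < r" by blast
  qed
  thus ?thesis unfolding LIMSEQ_iff by blast
qed

context grph begin

definition rho where "rho = lim (\<lambda>n. root n (real (Rn adj n)))"

lemma rho_lim: "(\<lambda>n. root n (real (Rn adj n))) \<longlonglongrightarrow> rho"
proof -
  define a where "a n = ln (real (Rn adj n))" for n
  have R1: "real (Rn adj n) \<ge> 1" for n using Rn_ge1 by simp
  have nn: "a n \<ge> 0" for n unfolding a_def using R1 by simp
  have sub: "a (m + n) \<le> a m + a n" for m n
  proof -
    have "real (Rn adj (m + n)) \<le> real (Rn adj m) * real (Rn adj n)"
      using Rn_submult by (metis of_nat_le_iff of_nat_mult)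
    moreover have pos: "0 < real (Rn adj (m+n))" "0 < real (Rn adj m) * real (Rn adj n)"
      using R1[of "m+n"] R1[of m] R1[of n] by (auto intro!: mult_pos_pos)
    ultimately have "ln (real (Rn adj (m + n))) \<le> ln (real (Rn adj m) * real (Rn adj n))"
      using ln_le_cancel_iff[OF pos] by simp
    thus ?thesis unfolding a_def using Rn_ge1[of m] Rn_ge1[of n] by (simp add: ln_mult)
  qed
  obtain L where L: "(\<lambda>n. a n / real n) \<longlonglongrightarrow> L" using fekete[OF nn sub] by blast
  hence "(\<lambda>n. exp (a n / real n)) \<longlonglongrightarrow> exp L" by (rule tendsto_exp)
  moreover have "\<forall>\<^sub>F n in sequentially. exp (a n / real n) = root n (real (Rn adj n))"
  proof (rule eventually_sequentiallyI[of 1])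
    fix n :: nat assume "1 \<le> n"
    thus "exp (a n / real n) = root n (real (Rn adj n))"
      using R1[of n] unfolding a_def by (simp add: root_powr_inverse powr_def)
  qed
  ultimately have "(\<lambda>n. root n (real (Rn adj n))) \<longlonglongrightarrow> exp L"
    by (rule Lim_transform_eventually)
  thus ?thesis unfolding rho_def by (simp add: limI)
qed

lemma Rn0: "Rn adj 0 = 1"
  using Rn_attained[of 0] by auto

lemma rho_ge1: "rho \<ge> 1"
proof (rule LIMSEQ_le_const[OF rho_lim], intro exI allI impI)
  fix n :: nat assume "n \<ge> 1"
  thus "1 \<le> root n (real (Rn adj n))" using Rn_ge1[of n] by simp
qed

lemma rho_le_qq: "rho \<le> real qq"
proof (rule LIMSEQ_le_const2[OF rho_lim], intro exI allI impI)
  fix n :: nat assume n: "n \<ge> 1"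
  have "root n (real (Rn adj n)) \<le> root n (real qq ^ n)"
    using n Rn_le[of n] by (subst real_root_le_iff) (auto simp del: of_nat_power simp: of_nat_power[symmetric])
  also have "\<dots> = real qq" using n by (intro real_root_power_cancel) auto
  finally show "root n (real (Rn adj n)) \<le> real qq" .
qed

lemma Rn_eventually: "\<epsilon> > 0 \<Longrightarrow> \<exists>N. \<forall>n\<ge>N. real (Rn adj n) \<le> (rho + \<epsilon>) ^ n"
proof -
  assume e: "\<epsilon> > 0"
  have "\<forall>\<^sub>F n in sequentially. root n (real (Rn adj n)) < rho + \<epsilon>"
    using rho_lim e by (intro order_tendstoD(2)) auto
  then obtain N where N: "\<forall>n\<ge>N. root n (real (Rn adj n)) < rho + \<epsilon>"
    unfolding eventually_sequentially by blast
  have "real (Rn adj n) \<le> (rho + \<epsilon>) ^ n" if "n \<ge> max N 1" for n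
  proof -
    have n: "n \<ge> 1" "n \<ge> N" using that by auto
    have "root n (real (Rn adj n)) \<le> rho + \<epsilon>" using N n by (simp add: less_imp_le)
    hence "root n (real (Rn adj n)) ^ n \<le> (rho + \<epsilon>) ^ n"
      using n by (intro power_mono) auto
    thus ?thesis using n by (simp add: real_root_pow_pos2)
  qed
  thus ?thesis by blast
qed

lemma rho_le_of_bound:
  assumes lam: "l > 0" and C: "C > 0" and b: "\<And>n. real (Rn adj n) \<le> C * l ^ n"
  shows "rho \<le> l"
proof -
  have "(\<lambda>n. root n C * l) \<longlonglongrightarrow> 1 * l"
    by (intro tendsto_mult LIMSEQ_root_const C tendsto_const)
  moreover have "\<forall>\<^sub>F n in sequentially. root n (real (Rn adj n)) \<le> root n C * l"
  proof (rule eventually_sequentiallyI[of 1])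
    fix n :: nat assume n: "1 \<le> n"
    have "root n (real (Rn adj n)) \<le> root n (C * l ^ n)" using b n by (subst real_root_le_iff) auto
    also have "\<dots> = root n C * l"
    proof -
      have "root n (l ^ n) = l" using n lam by (intro real_root_power_cancel) auto
      thus ?thesis by (simp add: real_root_mult)
    qed
    finally show "root n (real (Rn adj n)) \<le> root n C * l" .
  qed
  ultimately show ?thesis using rho_lim by (simp add: tendsto_le[OF sequentially_bot])
qed

lemma summable_Rn: "l > rho \<Longrightarrow> summable (\<lambda>n. real (Rn adj n) / l ^ n)"
proof -
  assume lam: "l > rho"
  define \<mu> where "\<mu> = (rho + l) / 2"
  have mu: "\<mu> > rho" "\<mu> < l" unfolding \<mu>_def using lam by auto
  have l0: "l > 0" using lam rho_ge1 by simp
  have m0: "\<mu> > 0" using mu rho_ge1 by simp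
  obtain N where N: "\<forall>n\<ge>N. real (Rn adj n) \<le> (rho + (\<mu> - rho)) ^ n"
    using Rn_eventually[of "\<mu> - rho"] mu by auto
  have g: "summable (\<lambda>n. (\<mu> / l) ^ n)" using mu m0 l0 by (intro summable_geometric) simp
  have b: "\<exists>N. \<forall>n\<ge>N. norm (real (Rn adj n) / l ^ n) \<le> (\<mu> / l) ^ n"
  proof (intro exI allI impI)
    fix n assume "n \<ge> N"
    hence "real (Rn adj n) \<le> \<mu> ^ n" using N by simp
    thus "norm (real (Rn adj n) / l ^ n) \<le> (\<mu> / l) ^ n"
      using l0 by (simp add: power_divide divide_right_mono)
  qed
  show ?thesis by (rule summable_comparison_test[OF b g])
qed

end

context grth begin

lemma supnorm_one_Tpow: "supnorm adj ((T ^^ n) (\<lambda>_. 1)) = real (Rn adj n)"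
proof (rule antisym)
  show "supnorm adj ((T ^^ n) (\<lambda>_. 1)) \<le> real (Rn adj n)"
    by (rule supnorm_le) (simp add: Tpow_one Nn_le_Rn paths_edge)
  obtain e where e: "e \<in> edges adj" "Rn adj n = Nn adj n e" using Rn_attained by blast
  have p: "mkpath e \<in> P" "mkpath e 0 = e" using mkpath[OF e(1)] by auto
  have "bnd ((T ^^ n) (\<lambda>_. 1))" by (rule bndI[of _ "real (Rn adj n)"]) (simp add: Tpow_one Nn_le_Rn paths_edge)
  from supnorm_ge[OF this p(1)] show "real (Rn adj n) \<le> supnorm adj ((T ^^ n) (\<lambda>_. 1))"
    using p e by (simp add: Tpow_one)
qed

lemma one_Lip: "(\<lambda>_. 1) \<in> Lip adj \<theta>" and L1_one_Tpow: "L1 adj \<theta> ((T ^^ n) (\<lambda>_. 1)) = 0"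
proof -
  have v: "valid 0 ((T ^^ n) (\<lambda>_. 1))" unfolding valid_def by (auto simp: Tpow_one)
  show "L1 adj \<theta> ((T ^^ n) (\<lambda>_. 1)) = 0"
    using L1_le[OF v] L1_nonneg[of "(T ^^ n) (\<lambda>_. 1)"] v unfolding lipc_def by force
  show "(\<lambda>_. 1) \<in> Lip adj \<theta>" unfolding Lip_iff lipc_def valid_def bnd_def by auto
qed

lemma thnorm_one: "thnorm adj \<theta> (\<lambda>_. 1) = 1" and supnorm_one: "supnorm adj (\<lambda>_. 1) = 1"
  using supnorm_one_Tpow[of 0] L1_one_Tpow[of 0] by (simp_all add: thnorm_def Rn0)

lemma opnorm_th: "opnorm_on (Lip adj \<theta>) (thnorm adj \<theta>) (T ^^ n) = real (Rn adj n)"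
  unfolding opnorm_on_def
proof (rule cSup_eq_maximum)
  show "real (Rn adj n) \<in> {thnorm adj \<theta> ((T ^^ n) f) / thnorm adj \<theta> f |f. f \<in> Lip adj \<theta> \<and> thnorm adj \<theta> f \<noteq> 0}"
    using one_Lip thnorm_one L1_one_Tpow supnorm_one_Tpow
    by (intro CollectI exI[of _ "\<lambda>_. 1"]) (simp add: thnorm_def)
  fix x assume "x \<in> {thnorm adj \<theta> ((T ^^ n) f) / thnorm adj \<theta> f |f. f \<in> Lip adj \<theta> \<and> thnorm adj \<theta> f \<noteq> 0}"
  then obtain f where f: "f \<in> Lip adj \<theta>" "thnorm adj \<theta> f \<noteq> 0" and x: "x = thnorm adj \<theta> ((T ^^ n) f) / thnorm adj \<theta> f"
    by blast
  have pos: "thnorm adj \<theta> f > 0" using f thnorm_nonneg by force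
  have "thnorm adj \<theta> ((T ^^ n) f) \<le> real (Rn adj n) * \<theta> ^ n * L1 adj \<theta> f + real (Rn adj n) * supnorm adj f"
    unfolding thnorm_def using Tpow_Lip[OF f(1)] by (intro add_mono) auto
  also have "\<dots> \<le> real (Rn adj n) * L1 adj \<theta> f + real (Rn adj n) * supnorm adj f"
  proof -
    have t: "\<theta> ^ n \<le> 1" using th0 th1 by (simp add: power_le_one)
    have "L1 adj \<theta> f \<ge> 0" using f(1) L1_nonneg unfolding Lip_iff by simp
    hence "real (Rn adj n) * \<theta> ^ n * L1 adj \<theta> f \<le> real (Rn adj n) * 1 * L1 adj \<theta> f"
      using t by (intro mult_right_mono mult_left_mono) auto
    thus ?thesis by simp
  qed
  also have "\<dots> = real (Rn adj n) * thnorm adj \<theta> f" by (simp add: thnorm_def algebra_simps)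
  finally show "x \<le> real (Rn adj n)" using pos unfolding x by (simp add: divide_le_eq)
qed

lemma opnorm_sup: "opnorm_on (Lip adj \<theta>) (supnorm adj) (T ^^ n) = real (Rn adj n)"
  unfolding opnorm_on_def
proof (rule cSup_eq_maximum)
  show "real (Rn adj n) \<in> {supnorm adj ((T ^^ n) f) / supnorm adj f |f. f \<in> Lip adj \<theta> \<and> supnorm adj f \<noteq> 0}"
    using one_Lip supnorm_one supnorm_one_Tpow
    by (intro CollectI exI[of _ "\<lambda>_. 1"]) simp
  fix x assume "x \<in> {supnorm adj ((T ^^ n) f) / supnorm adj f |f. f \<in> Lip adj \<theta> \<and> supnorm adj f \<noteq> 0}"
  then obtain f where f: "f \<in> Lip adj \<theta>" "supnorm adj f \<noteq> 0" and x: "x = supnorm adj ((T ^^ n) f) / supnorm adj f"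
    by blast
  have pos: "supnorm adj f > 0" using f supnorm_nonneg unfolding Lip_iff by force
  have "supnorm adj ((T ^^ n) f) \<le> real (Rn adj n) * supnorm adj f" using Tpow_Lip[OF f(1)] by auto
  thus "x \<le> real (Rn adj n)" using pos unfolding x by (simp add: divide_le_eq)
qed

lemma final_ineq: "\<epsilon> > 0 \<Longrightarrow> \<exists>N. \<forall>n\<ge>N. \<forall>f \<in> Lip adj \<theta>.
    thnorm adj \<theta> ((T ^^ n) f) \<le> (rho + \<epsilon>) ^ n * (\<theta> ^ n * L1 adj \<theta> f + supnorm adj f)"
proof -
  assume "\<epsilon> > 0"
  then obtain N where N: "\<forall>n\<ge>N. real (Rn adj n) \<le> (rho + \<epsilon>) ^ n" using Rn_eventually by blast
  have "thnorm adj \<theta> ((T ^^ n) f) \<le> (rho + \<epsilon>) ^ n * (\<theta> ^ n * L1 adj \<theta> f + supnorm adj f)"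
    if n: "n \<ge> N" and f: "f \<in> Lip adj \<theta>" for n f
  proof -
    have nn: "\<theta> ^ n * L1 adj \<theta> f + supnorm adj f \<ge> 0"
      using f th0 L1_nonneg supnorm_nonneg unfolding Lip_iff by simp
    have "thnorm adj \<theta> ((T ^^ n) f) \<le> real (Rn adj n) * \<theta> ^ n * L1 adj \<theta> f + real (Rn adj n) * supnorm adj f"
      unfolding thnorm_def using Tpow_Lip[OF f] by (intro add_mono) auto
    also have "\<dots> = real (Rn adj n) * (\<theta> ^ n * L1 adj \<theta> f + supnorm adj f)" by (simp add: algebra_simps)
    also have "\<dots> \<le> (rho + \<epsilon>) ^ n * (\<theta> ^ n * L1 adj \<theta> f + supnorm adj f)"
      using N n nn by (intro mult_right_mono) auto
    finally show ?thesis .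
  qed
  thus ?thesis by blast
qed

end


lemma sum_bound:
  fixes a :: "nat \<Rightarrow> 'a::banach"
  assumes ab: "\<And>n. norm (a n) \<le> b n" and b: "summable b"
  shows "summable a" and "norm (suminf a) \<le> suminf b"
proof -
  have sn: "summable (\<lambda>n. norm (a n))"
    by (rule summable_comparison_test'[OF b, of 0]) (use ab in simp)
  thus "summable a" by (rule summable_norm_cancel)
  have "norm (suminf a) \<le> (\<Sum>n. norm (a n))" using sn by (rule summable_norm)
  also have "\<dots> \<le> suminf b" using ab sn b by (intro suminf_le) auto
  finally show "norm (suminf a) \<le> suminf b" .
qed

context grth begin

lemma T_scale: "T (\<lambda>q. c * g q) p = c * T g p" by (simp add: Tr_eq sum_distrib_left)
lemma T_add: "T (\<lambda>q. f q + g q) p = T f p + T g p" by (simp add: Tr_eq sum.distrib)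
lemma T_diff: "T (\<lambda>q. f q - g q) p = T f p - T g p" by (simp add: Tr_eq sum_subtractf)

lemma eig_pow:
  assumes "\<And>p. p \<in> P \<Longrightarrow> z * f p - T f p = 0" "p \<in> P"
  shows "(T ^^ n) f p = z ^ n * f p"
  using assms(2)
proof (induction n arbitrary: p)
  case 0 thus ?case by simp
next
  case (Suc n)
  have "(T ^^ Suc n) f p = T (\<lambda>q. z ^ n * f q) p"
    unfolding Tpow_Suc using Suc.IH Suc.prems by (intro T_cong) auto
  also have "\<dots> = z ^ n * T f p" by (rule T_scale)
  also have "\<dots> = z ^ n * (z * f p)" using assms(1)[OF Suc.prems] by simp
  finally show ?case by simp
qed

lemma big_not_spec:
  assumes zr: "norm z > rho"
  shows "z \<notin> spectrum_Lip adj \<theta>"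
proof -
  define w where "w = norm z"
  have w0: "w > 0" unfolding w_def using zr rho_ge1 by linarith
  have z0: "z \<noteq> 0"
  proof
    assume "z = 0" thus False using zr rho_ge1 by simp
  qed
  have sR: "summable (\<lambda>n. real (Rn adj n) / w ^ n)" using summable_Rn zr unfolding w_def by blast
  have sR1: "summable (\<lambda>n. real (Rn adj n) / w ^ Suc n)"
  proof -
    have "(\<lambda>n. real (Rn adj n) / w ^ n / w) = (\<lambda>n. real (Rn adj n) / w ^ Suc n)"
      by (simp add: divide_divide_eq_left mult.commute)
    thus ?thesis using summable_divide[OF sR, of w] by simp
  qed
  have zp: "norm (z ^ Suc n) = w ^ Suc n" for n unfolding w_def by (simp only: norm_power)
  have inj: "\<forall>p\<in>P. f p = 0" if f: "f \<in> Lip adj \<theta>" and e: "\<forall>p\<in>P. z * f p - T f p = 0" for f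
  proof
    fix p assume p: "p \<in> P"
    have b: "bnd f" using f Lip_iff by auto
    have "norm (f p) \<le> supnorm adj f * (real (Rn adj n) / w ^ n)" for n
    proof -
      have "norm ((T ^^ n) f p) \<le> real (Rn adj n) * supnorm adj f"
        using Tpow_Lip(2)[OF f, of n] supnorm_ge[OF _ p] Tpow_Lip(1)[OF f, of n] Lip_iff
        by (meson order_trans)
      moreover have "(T ^^ n) f p = z ^ n * f p" using e p by (intro eig_pow) auto
      ultimately have "w ^ n * norm (f p) \<le> real (Rn adj n) * supnorm adj f"
        unfolding w_def by (simp add: norm_mult norm_power)
      thus ?thesis using w0 by (simp add: field_simps)
    qed
    moreover have "(\<lambda>n. supnorm adj f * (real (Rn adj n) / w ^ n)) \<longlonglongrightarrow> supnorm adj f * 0"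
      by (intro tendsto_mult tendsto_const summable_LIMSEQ_zero sR)
    ultimately have "norm (f p) \<le> 0"
      by (intro LIMSEQ_le_const[of _ _ "norm (f p)"] ) (auto intro: tendsto_le)
    thus "f p = 0" by simp
  qed
  have surj: "\<exists>f\<in>Lip adj \<theta>. \<forall>p\<in>P. z * f p - T f p = g p" if g: "g \<in> Lip adj \<theta>" for g
  proof -
    have bg: "bnd g" and lg: "lipc g" using g Lip_iff by auto
    define a where "a n p = (T ^^ n) g p / z ^ Suc n" for n p
    define f where "f p = (\<Sum>n. a n p)" for p
    have an: "norm (a n p) \<le> supnorm adj g * (real (Rn adj n) / w ^ Suc n)" if p: "p \<in> P" for n p
    proof -
      have "norm ((T ^^ n) g p) \<le> real (Rn adj n) * supnorm adj g"
        using Tpow_Lip(2)[OF g, of n] supnorm_ge[OF _ p] Tpow_Lip(1)[OF g, of n] Lip_iff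
        by (meson order_trans)
      moreover note zp[of n]
      ultimately show ?thesis unfolding a_def using w0
        by (simp add: norm_divide divide_right_mono mult.commute del: power_Suc)
    qed
    have sb: "summable (\<lambda>n. supnorm adj g * (real (Rn adj n) / w ^ Suc n))"
      by (intro summable_mult sR1)
    have sa: "summable (\<lambda>n. a n p)" if "p \<in> P" for p using sum_bound(1)[OF an[OF that] sb] .
    have fb: "norm (f p) \<le> (\<Sum>n. supnorm adj g * (real (Rn adj n) / w ^ Suc n))" if "p \<in> P" for p
      unfolding f_def using sum_bound(2)[OF an[OF that] sb] .
    have val: "valid (L1 adj \<theta> g * (\<Sum>n. real (Rn adj n) / w ^ Suc n)) f"
      unfolding valid_def
    proof (intro conjI ballI impI)
      show "0 \<le> L1 adj \<theta> g * (\<Sum>n. real (Rn adj n) / w ^ Suc n)"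
        using L1_nonneg[OF lg] w0 sR1 by (intro mult_nonneg_nonneg suminf_nonneg) auto
      fix p p' assume pp: "p \<in> P" "p' \<in> P" "p 0 = p' 0"
      have dd: "norm (a n p - a n p') \<le> L1 adj \<theta> g * d p p' * (real (Rn adj n) / w ^ Suc n)" for n
      proof -
        have "norm ((T ^^ n) g p - (T ^^ n) g p') \<le> real (Nn adj n (p 0)) * \<theta> ^ n * L1 adj \<theta> g * d p p'"
          using pp by (intro Tpow_lip L1_valid lg)
        also have "\<dots> \<le> real (Rn adj n) * 1 * L1 adj \<theta> g * d p p'"
          using Nn_Rn_real[OF pp(1)] L1_nonneg[OF lg] d_nonneg th0 th1
          by (intro mult_right_mono mult_mono) (auto simp: power_le_one)
        finally have X: "norm ((T ^^ n) g p - (T ^^ n) g p') \<le> real (Rn adj n) * L1 adj \<theta> g * d p p'" by simp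
        have "a n p - a n p' = ((T ^^ n) g p - (T ^^ n) g p') / z ^ Suc n"
          unfolding a_def by (simp add: diff_divide_distrib)
        hence "norm (a n p - a n p') = norm ((T ^^ n) g p - (T ^^ n) g p') / w ^ Suc n"
          by (simp only: norm_divide zp)
        also have "\<dots> \<le> real (Rn adj n) * L1 adj \<theta> g * d p p' / w ^ Suc n"
          using w0 X by (intro divide_right_mono) auto
        finally show ?thesis by (simp add: mult_ac)
      qed
      have "f p - f p' = (\<Sum>n. a n p - a n p')" unfolding f_def
        using sa[OF pp(1)] sa[OF pp(2)] by (rule suminf_diff)
      also have "norm \<dots> \<le> (\<Sum>n. L1 adj \<theta> g * d p p' * (real (Rn adj n) / w ^ Suc n))"
        using dd by (intro sum_bound(2) summable_mult sR1)
      also have "\<dots> = L1 adj \<theta> g * (\<Sum>n. real (Rn adj n) / w ^ Suc n) * d p p'"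
        using suminf_mult[OF sR1, of "L1 adj \<theta> g * d p p'"] by (simp add: mult_ac)
      finally show "norm (f p - f p') \<le> L1 adj \<theta> g * (\<Sum>n. real (Rn adj n) / w ^ Suc n) * d p p'" .
    qed
    have "bnd f" using fb by (rule bndI)
    hence fL: "f \<in> Lip adj \<theta>" unfolding Lip_iff lipc_def using val by blast
    have eq: "z * f p - T f p = g p" if p: "p \<in> P" for p
    proof -
      have "T f p = (\<Sum>e0\<in>pred (p 0). \<Sum>n. a n (case_nat e0 p))" unfolding Tr_eq f_def ..
      also have "\<dots> = (\<Sum>n. \<Sum>e0\<in>pred (p 0). a n (case_nat e0 p))"
        using sa cons_path[OF p] by (intro suminf_sum[symmetric]) auto
      also have "\<dots> = (\<Sum>n. (T ^^ Suc n) g p / z ^ Suc n)"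
        unfolding a_def by (simp add: Tr_eq sum_divide_distrib)
      finally have Tf: "T f p = (\<Sum>n. (T ^^ Suc n) g p / z ^ Suc n)" .
      define b where "b n = (T ^^ n) g p / z ^ n" for n
      have zb: "(\<lambda>n. z * a n p) = b" unfolding a_def b_def using z0 by (auto simp: fun_eq_iff)
      have bs: "summable b"
      proof -
        have "summable (\<lambda>n. z * a n p)" using sa[OF p] by (rule summable_mult)
        moreover note zb
        ultimately show ?thesis by simp
      qed
      have "z * f p = (\<Sum>n. z * a n p)" unfolding f_def using sa[OF p] by (simp add: suminf_mult)
      also have "\<dots> = suminf b" using zb by simp
      also have "\<dots> = b 0 + (\<Sum>n. b (Suc n))" using suminf_split_head[OF bs] by simp
      also have "\<dots> = g p + T f p" unfolding Tf b_def by simp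
      finally show ?thesis by simp
    qed
    show ?thesis using fL eq by blast
  qed
  have A: "\<forall>f\<in>Lip adj \<theta>. (\<forall>p\<in>P. z * f p - T f p = 0) \<longrightarrow> (\<forall>p\<in>P. f p = 0)"
    using inj by blast
  have B: "\<forall>g\<in>Lip adj \<theta>. \<exists>f\<in>Lip adj \<theta>. \<forall>p\<in>P. z * f p - T f p = g p"
    using surj by blast
  show ?thesis unfolding spectrum_Lip_def using A B by (simp only: mem_Collect_eq not_not) 
qed

end


context grth begin

lemma supnorm_cong: "(\<And>p. p \<in> P \<Longrightarrow> f p = g p) \<Longrightarrow> supnorm adj f = supnorm adj g"
  unfolding supnorm_def by (intro SUP_cong) auto
lemma valid_cong: "(\<And>p. p \<in> P \<Longrightarrow> f p = g p) \<Longrightarrow> valid C f = valid C g"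
  unfolding valid_def by auto
lemma L1_cong: "(\<And>p. p \<in> P \<Longrightarrow> f p = g p) \<Longrightarrow> L1 adj \<theta> f = L1 adj \<theta> g"
proof -
  assume h: "\<And>p. p \<in> P \<Longrightarrow> f p = g p"
  have "{C. valid C f} = {C. valid C g}" using valid_cong[OF h] by simp
  thus ?thesis unfolding L1_def' by simp
qed
lemma thnorm_cong: "(\<And>p. p \<in> P \<Longrightarrow> f p = g p) \<Longrightarrow> thnorm adj \<theta> f = thnorm adj \<theta> g"
  unfolding thnorm_def using supnorm_cong L1_cong by metis
lemma bnd_cong: "(\<And>p. p \<in> P \<Longrightarrow> f p = g p) \<Longrightarrow> bnd f = bnd g"
  unfolding bnd_def by auto
lemma Lip_cong: "(\<And>p. p \<in> P \<Longrightarrow> f p = g p) \<Longrightarrow> f \<in> Lip adj \<theta> \<longleftrightarrow> g \<in> Lip adj \<theta>"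
  unfolding Lip_iff lipc_def using bnd_cong valid_cong by metis

lemma L1_le_thnorm: "f \<in> Lip adj \<theta> \<Longrightarrow> L1 adj \<theta> f \<le> thnorm adj \<theta> f"
  unfolding thnorm_def Lip_iff using supnorm_nonneg by simp

lemma thnorm_zero: "f \<in> Lip adj \<theta> \<Longrightarrow> thnorm adj \<theta> f = 0 \<Longrightarrow> p \<in> P \<Longrightarrow> f p = 0"
proof -
  assume f: "f \<in> Lip adj \<theta>" and z: "thnorm adj \<theta> f = 0" and p: "p \<in> P"
  have "norm (f p) \<le> supnorm adj f" using f p Lip_iff supnorm_ge by blast
  also have "\<dots> \<le> 0" using supnorm_le_thnorm[OF f] z by simp
  finally show "f p = 0" by simp
qed

lemma thnorm_0: "thnorm adj \<theta> (\<lambda>p. 0) = 0"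
  using thnorm_scale[OF one_Lip, of 0] by simp

lemma zero_Lip: "(\<lambda>p. 0) \<in> Lip adj \<theta>"
  using Lip_scale[OF one_Lip, of 0] by simp

lemma thnorm_sub_comm: "f \<in> Lip adj \<theta> \<Longrightarrow> g \<in> Lip adj \<theta> \<Longrightarrow>
  thnorm adj \<theta> (\<lambda>p. f p - g p) = thnorm adj \<theta> (\<lambda>p. g p - f p)"
  using thnorm_scale[OF Lip_diff[of g f], of "-1"] by simp

lemma thnorm_tri: "f \<in> Lip adj \<theta> \<Longrightarrow> g \<in> Lip adj \<theta> \<Longrightarrow> h \<in> Lip adj \<theta> \<Longrightarrow>
  thnorm adj \<theta> (\<lambda>p. f p - h p) \<le> thnorm adj \<theta> (\<lambda>p. f p - g p) + thnorm adj \<theta> (\<lambda>p. g p - h p)"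
  using thnorm_add[OF Lip_diff[of f g] Lip_diff[of g h]] by simp

lemma Lip_by_bounds:
  assumes a: "\<And>p. p \<in> P \<Longrightarrow> norm (h p) \<le> a"
    and b: "\<And>p p'. p \<in> P \<Longrightarrow> p' \<in> P \<Longrightarrow> p 0 = p' 0 \<Longrightarrow> norm (h p - h p') \<le> b * d p p'"
    and b0: "0 \<le> b"
  shows "h \<in> Lip adj \<theta>" and "thnorm adj \<theta> h \<le> a + b"
proof -
  have v: "valid b h" unfolding valid_def using b b0 by blast
  have bh: "bnd h" using a by (rule bndI)
  show "h \<in> Lip adj \<theta>" unfolding Lip_iff lipc_def using v bh by blast
  have "supnorm adj h \<le> a" by (rule supnorm_le) (rule a)
  thus "thnorm adj \<theta> h \<le> a + b" unfolding thnorm_def using L1_le[OF v] by simp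
qed

definition MM where "MM = {f \<in> Lip adj \<theta>. \<forall>x. x \<notin> P \<longrightarrow> f x = 0}"
definition dd where "dd f g = (if f \<in> MM \<and> g \<in> MM then thnorm adj \<theta> (\<lambda>p. f p - g p) else 0)"
definition rs where "rs f = (\<lambda>p. if p \<in> P then f p else 0)"

lemma rs_MM: "f \<in> Lip adj \<theta> \<Longrightarrow> rs f \<in> MM"
  unfolding MM_def rs_def using Lip_cong[of "\<lambda>p. if p \<in> P then f p else 0" f] by auto
lemma rs_th: "thnorm adj \<theta> (rs f) = thnorm adj \<theta> f"
  unfolding rs_def by (rule thnorm_cong) simp

lemma MM_Lip: "f \<in> MM \<Longrightarrow> f \<in> Lip adj \<theta>" unfolding MM_def by auto
lemma MM_diff: "f \<in> MM \<Longrightarrow> g \<in> MM \<Longrightarrow> (\<lambda>p. f p - g p) \<in> MM"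
  unfolding MM_def using Lip_diff by auto
lemma MM_add: "f \<in> MM \<Longrightarrow> g \<in> MM \<Longrightarrow> (\<lambda>p. f p + g p) \<in> MM"
  unfolding MM_def using Lip_add by auto
lemma MM_scale: "f \<in> MM \<Longrightarrow> (\<lambda>p. c * f p) \<in> MM"
  unfolding MM_def using Lip_scale by auto
lemma MM_0: "(\<lambda>p. 0) \<in> MM" unfolding MM_def using zero_Lip by auto

lemma ms: "Metric_space MM dd"
proof
  fix x y show "0 \<le> dd x y" unfolding dd_def using thnorm_nonneg MM_diff MM_Lip by auto
  show "dd x y = dd y x" unfolding dd_def using thnorm_sub_comm MM_Lip by auto
next
  fix x y assume xy: "x \<in> MM" "y \<in> MM"
  show "dd x y = 0 \<longleftrightarrow> x = y"
  proof
    assume "dd x y = 0"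
    hence "thnorm adj \<theta> (\<lambda>p. x p - y p) = 0" using xy unfolding dd_def by simp
    hence "x p - y p = 0" if "p \<in> P" for p using thnorm_zero[OF Lip_diff[OF MM_Lip MM_Lip, OF xy]] that by blast
    moreover have "x p = 0" "y p = 0" if "p \<notin> P" for p using xy that unfolding MM_def by auto
    ultimately show "x = y" by (metis eq_iff_diff_eq_0 ext)
  next
    assume "x = y" thus "dd x y = 0" unfolding dd_def using thnorm_0 by simp
  qed
next
  fix x y z assume "x \<in> MM" "y \<in> MM" "z \<in> MM"
  thus "dd x z \<le> dd x y + dd y z" unfolding dd_def using thnorm_tri MM_Lip by simp
qed

lemma complete: "Metric_space.mcomplete MM dd"
proof -
  interpret MS: Metric_space MM dd by (rule ms)
  show ?thesis unfolding MS.mcomplete_def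
  proof (intro allI impI)
    fix \<sigma> assume C: "MS.MCauchy \<sigma>"
    hence rM: "\<And>n. \<sigma> n \<in> MM" and cau: "\<And>\<epsilon>. \<epsilon> > 0 \<Longrightarrow> \<exists>N. \<forall>n n'. N \<le> n \<longrightarrow> N \<le> n' \<longrightarrow> dd (\<sigma> n) (\<sigma> n') < \<epsilon>"
      unfolding MS.MCauchy_def by auto
    have rL: "\<And>n. \<sigma> n \<in> Lip adj \<theta>" using rM MM_Lip by auto
    have dLip: "\<And>n m. (\<lambda>p. \<sigma> n p - \<sigma> m p) \<in> Lip adj \<theta>" using rL Lip_diff by blast
    have ddeq: "dd (\<sigma> n) (\<sigma> m) = thnorm adj \<theta> (\<lambda>p. \<sigma> n p - \<sigma> m p)" for n m
      unfolding dd_def using rM by simp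
    have ptw: "norm (\<sigma> n p - \<sigma> m p) \<le> dd (\<sigma> n) (\<sigma> m)" if "p \<in> P" for n m p
    proof -
      have b: "bnd (\<lambda>p. \<sigma> n p - \<sigma> m p)" using dLip Lip_iff by blast
      have "norm (\<sigma> n p - \<sigma> m p) \<le> supnorm adj (\<lambda>p. \<sigma> n p - \<sigma> m p)" by (rule supnorm_ge[OF b that])
      also have "\<dots> \<le> thnorm adj \<theta> (\<lambda>p. \<sigma> n p - \<sigma> m p)" by (rule supnorm_le_thnorm[OF dLip])
      finally show ?thesis by (simp add: ddeq)
    qed
    have lipw: "norm ((\<sigma> n p - \<sigma> m p) - (\<sigma> n p' - \<sigma> m p')) \<le> dd (\<sigma> n) (\<sigma> m) * d p p'"
      if "p \<in> P" "p' \<in> P" "p 0 = p' 0" for n m p p'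
    proof -
      have "norm ((\<sigma> n p - \<sigma> m p) - (\<sigma> n p' - \<sigma> m p')) \<le> L1 adj \<theta> (\<lambda>p. \<sigma> n p - \<sigma> m p) * d p p'"
        using L1_lip[of "\<lambda>p. \<sigma> n p - \<sigma> m p" p p'] dLip that Lip_iff by blast
      also have "\<dots> \<le> dd (\<sigma> n) (\<sigma> m) * d p p'"
        unfolding ddeq using L1_le_thnorm[OF dLip] d_nonneg by (intro mult_right_mono) auto
      finally show ?thesis .
    qed
    have conv: "convergent (\<lambda>n. \<sigma> n p)" if p: "p \<in> P" for p
    proof -
      have "Cauchy (\<lambda>n. \<sigma> n p)"
      proof (rule metric_CauchyI)
        fix e :: real assume "e > 0"
        then obtain N where N: "\<forall>n n'. N \<le> n \<longrightarrow> N \<le> n' \<longrightarrow> dd (\<sigma> n) (\<sigma> n') < e" using cau by blast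
        show "\<exists>M. \<forall>m\<ge>M. \<forall>n\<ge>M. dist (\<sigma> m p) (\<sigma> n p) < e"
          using N ptw[OF p] by (metis dist_norm order_le_less_trans)
      qed
      thus ?thesis by (simp add: Cauchy_convergent_iff)
    qed
    define l where "l p = (if p \<in> P then lim (\<lambda>n. \<sigma> n p) else 0)" for p
    have lim: "(\<lambda>n. \<sigma> n p) \<longlonglongrightarrow> l p" if "p \<in> P" for p
      using conv[OF that] that unfolding l_def by (simp add: convergent_LIMSEQ_iff)
    have key: "(\<lambda>p. \<sigma> n p - l p) \<in> Lip adj \<theta> \<and> thnorm adj \<theta> (\<lambda>p. \<sigma> n p - l p) \<le> 2 * e"
      if N: "\<forall>n n'. N \<le> n \<longrightarrow> N \<le> n' \<longrightarrow> dd (\<sigma> n) (\<sigma> n') < e" and n: "n \<ge> N" and e: "e > 0" for N n e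
    proof -
      have a: "norm (\<sigma> n p - l p) \<le> e" if p: "p \<in> P" for p
      proof -
        have "(\<lambda>m. norm (\<sigma> n p - \<sigma> m p)) \<longlonglongrightarrow> norm (\<sigma> n p - l p)"
          by (intro tendsto_norm tendsto_diff tendsto_const lim p)
        moreover have "\<forall>m\<ge>N. norm (\<sigma> n p - \<sigma> m p) \<le> e"
          using ptw[OF p, of n] N n by (meson less_imp_le order_trans)
        ultimately show ?thesis by (intro LIMSEQ_le_const2) auto
      qed
      have b: "norm ((\<sigma> n p - l p) - (\<sigma> n p' - l p')) \<le> e * d p p'"
        if pp: "p \<in> P" "p' \<in> P" "p 0 = p' 0" for p p'
      proof -
        have "(\<lambda>m. norm ((\<sigma> n p - \<sigma> m p) - (\<sigma> n p' - \<sigma> m p'))) \<longlonglongrightarrow> norm ((\<sigma> n p - l p) - (\<sigma> n p' - l p'))"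
          by (intro tendsto_norm tendsto_diff tendsto_const lim pp)
        moreover have "\<forall>m\<ge>N. norm ((\<sigma> n p - \<sigma> m p) - (\<sigma> n p' - \<sigma> m p')) \<le> e * d p p'"
        proof (intro allI impI)
          fix m assume "m \<ge> N"
          hence "dd (\<sigma> n) (\<sigma> m) \<le> e" using N n by (meson less_imp_le)
          hence "dd (\<sigma> n) (\<sigma> m) * d p p' \<le> e * d p p'" using d_nonneg by (intro mult_right_mono) auto
          thus "norm ((\<sigma> n p - \<sigma> m p) - (\<sigma> n p' - \<sigma> m p')) \<le> e * d p p'"
            using lipw[OF pp, of n m] by linarith
        qed
        ultimately show ?thesis by (intro LIMSEQ_le_const2) auto
      qed
      show ?thesis using Lip_by_bounds[of "\<lambda>p. \<sigma> n p - l p" e e] a b e by auto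
    qed
    obtain N1 where N1: "\<forall>n n'. N1 \<le> n \<longrightarrow> N1 \<le> n' \<longrightarrow> dd (\<sigma> n) (\<sigma> n') < 1" using cau[of 1] by auto
    have lL: "l \<in> Lip adj \<theta>"
    proof -
      have k: "(\<lambda>p. \<sigma> N1 p - l p) \<in> Lip adj \<theta>" using key[OF N1, of N1] by auto
      have "(\<lambda>p. \<sigma> N1 p - (\<sigma> N1 p - l p)) \<in> Lip adj \<theta>"
        by (rule Lip_diff[OF rL k])
      thus ?thesis by simp
    qed
    have lM: "l \<in> MM" unfolding MM_def using lL by (auto simp: l_def)
    have "limitin MS.mtopology \<sigma> l sequentially"
      unfolding MS.limitin_metric
    proof (intro conjI allI impI lM)
      fix \<epsilon> :: real assume e: "\<epsilon> > 0"
      obtain N where N: "\<forall>n n'. N \<le> n \<longrightarrow> N \<le> n' \<longrightarrow> dd (\<sigma> n) (\<sigma> n') < \<epsilon> / 3" using cau[of "\<epsilon>/3"] e by auto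
      show "\<forall>\<^sub>F n in sequentially. \<sigma> n \<in> MM \<and> dd (\<sigma> n) l < \<epsilon>"
      proof (rule eventually_sequentiallyI[of N])
        fix n assume n: "N \<le> n"
        have "thnorm adj \<theta> (\<lambda>p. \<sigma> n p - l p) \<le> 2 * (\<epsilon> / 3)" using key[OF N n] e by auto
        thus "\<sigma> n \<in> MM \<and> dd (\<sigma> n) l < \<epsilon>" unfolding dd_def using rM lM e by auto
      qed
    qed
    thus "\<exists>x. limitin MS.mtopology \<sigma> x sequentially" by blast
  qed
qed

end


context grth begin

definition Rop where "Rop f = (\<lambda>p. if p \<in> P then complex_of_real rho * f p - T f p else 0)"

lemma T_Lip: "f \<in> Lip adj \<theta> \<Longrightarrow> T f \<in> Lip adj \<theta>"
  using Tpow_Lip(1)[of f 1] by simp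

lemma Rop_MM: "f \<in> Lip adj \<theta> \<Longrightarrow> Rop f \<in> MM"
proof -
  assume f: "f \<in> Lip adj \<theta>"
  have "(\<lambda>p. complex_of_real rho * f p - T f p) \<in> Lip adj \<theta>"
    using f by (intro Lip_diff Lip_scale T_Lip)
  hence "Rop f \<in> Lip adj \<theta>" unfolding Rop_def by (rule Lip_cong[THEN iffD1, rotated]) simp
  thus ?thesis unfolding MM_def Rop_def by simp
qed

lemma Rop_diff: "Rop (\<lambda>p. f p - g p) p = Rop f p - Rop g p"
  unfolding Rop_def by (simp add: T_diff algebra_simps)
lemma Rop_scale: "Rop (\<lambda>p. c * f p) p = c * Rop f p"
  unfolding Rop_def by (simp add: T_scale algebra_simps)
lemma Rop_0: "Rop (\<lambda>p. 0) p = 0"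
  using Rop_scale[of 0 "\<lambda>p. 0" p] by simp

lemma spec_facts:
  assumes "complex_of_real rho \<notin> spectrum_Lip adj \<theta>"
  shows "\<forall>f\<in>Lip adj \<theta>. (\<forall>p\<in>P. complex_of_real rho * f p - T f p = 0) \<longrightarrow> (\<forall>p\<in>P. f p = 0)"
    and "\<forall>g\<in>Lip adj \<theta>. \<exists>f\<in>Lip adj \<theta>. \<forall>p\<in>P. complex_of_real rho * f p - T f p = g p"
  using assms unfolding spectrum_Lip_def by (simp_all only: mem_Collect_eq not_not) blast+

lemma approx:
  assumes sp: "complex_of_real rho \<notin> spectrum_Lip adj \<theta>"
  shows "\<exists>K0>0. \<forall>g\<in>MM. \<forall>\<epsilon>>0. \<exists>f\<in>MM. thnorm adj \<theta> f \<le> K0 * thnorm adj \<theta> g \<and>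
            thnorm adj \<theta> (\<lambda>p. Rop f p - g p) < \<epsilon>"
proof -
  interpret MS: Metric_space MM dd by (rule ms)
  note surj = spec_facts(2)[OF sp]
  define V where "V k = {Rop f | f. f \<in> MM \<and> thnorm adj \<theta> f \<le> real k}" for k :: nat
  define F where "F k = MS.mtopology closure_of V k" for k
  have VM: "V k \<subseteq> MM" for k unfolding V_def using Rop_MM MM_Lip by auto
  have cover: "MM \<subseteq> \<Union> (range F)"
  proof
    fix g assume g: "g \<in> MM"
    obtain f where f: "f \<in> Lip adj \<theta>" "\<forall>p\<in>P. complex_of_real rho * f p - T f p = g p"
      using surj g MM_Lip by blast
    have f': "rs f \<in> MM" using rs_MM[OF f(1)] .
    have "Rop (rs f) = g"
    proof
      fix p show "Rop (rs f) p = g p"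
      proof (cases "p \<in> P")
        case True
        have "T (rs f) p = T f p" using True by (intro T_cong) (simp add: rs_def)
        thus ?thesis using True f(2) unfolding Rop_def by (simp add: rs_def)
      next
        case False thus ?thesis using g unfolding Rop_def MM_def by simp
      qed
    qed
    moreover obtain k :: nat where "thnorm adj \<theta> (rs f) \<le> real k" using real_arch_simple by blast
    ultimately have "g \<in> V k" unfolding V_def using f' by blast
    hence "g \<in> F k" unfolding F_def using VM closure_of_subset[of "V k" MS.mtopology] by auto
    thus "g \<in> \<Union> (range F)" by blast
  qed
  have UF: "\<Union> (range F) = MM" using cover closure_of_subset_topspace unfolding F_def by fastforce
  have "\<exists>k. MS.mtopology interior_of F k \<noteq> {}"
  proof (rule ccontr)
    assume "\<not> ?thesis"
    hence "MS.mtopology interior_of \<Union> (range F) = {}"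
      by (intro MS.metric_Baire_category_alt complete) (auto simp: F_def)
    moreover have "MS.mtopology interior_of MM = MM"
      using interior_of_topspace[of MS.mtopology] by simp
    ultimately show False using UF MM_0 by auto
  qed
  then obtain k g0 where g0: "g0 \<in> MS.mtopology interior_of F k" by blast
  then obtain r where r: "r > 0" "MS.mball g0 r \<subseteq> F k" and g0M: "g0 \<in> MM"
    unfolding MS.metric_interior_of by blast
  have inF: "\<exists>f\<in>MM. thnorm adj \<theta> f \<le> real k \<and> dd x (Rop f) < \<epsilon>" if "x \<in> F k" "\<epsilon> > 0" for x \<epsilon>
  proof -
    have "\<exists>y\<in>V k. y \<in> MS.mball x \<epsilon>" using that unfolding F_def MS.metric_closure_of by blast
    thus ?thesis unfolding V_def by auto
  qed
  have small: "\<exists>f\<in>MM. thnorm adj \<theta> f \<le> 2 * real k \<and> thnorm adj \<theta> (\<lambda>p. Rop f p - g p) < \<epsilon>"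
    if g: "g \<in> MM" "thnorm adj \<theta> g < r" and e: "\<epsilon> > 0" for g \<epsilon>
  proof -
    define g1 where "g1 = (\<lambda>p. g0 p + g p)"
    have g1M: "g1 \<in> MM" unfolding g1_def using MM_add g0M g by blast
    have "dd g0 g1 = thnorm adj \<theta> (\<lambda>p. (-1) * g p)" unfolding dd_def g1_def using g1M g0M by (simp add: g1_def)
    also have "\<dots> = thnorm adj \<theta> g" using thnorm_scale[OF MM_Lip[OF g(1)], of "-1"] by simp
    finally have "g1 \<in> MS.mball g0 r" using g1M g0M g by simp
    hence "g1 \<in> F k" using r by blast
    then obtain f1 where f1: "f1 \<in> MM" "thnorm adj \<theta> f1 \<le> real k" "dd g1 (Rop f1) < \<epsilon> / 2"
      using inF e by (meson half_gt_zero)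
    have "g0 \<in> MS.mball g0 r" using g0M r by simp
    hence "g0 \<in> F k" using r by blast
    then obtain f2 where f2: "f2 \<in> MM" "thnorm adj \<theta> f2 \<le> real k" "dd g0 (Rop f2) < \<epsilon> / 2"
      using inF e by (meson half_gt_zero)
    define f where "f = (\<lambda>p. f1 p - f2 p)"
    have fM: "f \<in> MM" unfolding f_def using MM_diff f1 f2 by blast
    have "thnorm adj \<theta> f \<le> thnorm adj \<theta> f1 + thnorm adj \<theta> (\<lambda>p. (-1) * f2 p)"
      unfolding f_def using thnorm_add[OF MM_Lip[OF f1(1)] Lip_scale[OF MM_Lip[OF f2(1)], of "-1"]] by simp
    also have "\<dots> \<le> 2 * real k" using thnorm_scale[OF MM_Lip[OF f2(1)], of "-1"] f1 f2 by simp
    finally have fn: "thnorm adj \<theta> f \<le> 2 * real k" .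
    have R1: "Rop f1 \<in> MM" "Rop f2 \<in> MM" using Rop_MM MM_Lip f1 f2 by auto
    have eq: "(\<lambda>p. Rop f p - g p) = (\<lambda>p. (Rop f1 p - g1 p) - (Rop f2 p - g0 p))"
      unfolding f_def g1_def by (simp add: Rop_diff fun_eq_iff algebra_simps)
    have "thnorm adj \<theta> (\<lambda>p. Rop f p - g p) \<le> thnorm adj \<theta> (\<lambda>p. Rop f1 p - g1 p) + thnorm adj \<theta> (\<lambda>p. Rop f2 p - g0 p)"
    proof -
      have eq2: "(\<lambda>p. Rop f1 p - g1 p - (Rop f2 p - g0 p)) = (\<lambda>p. (Rop f1 p - g1 p) + (g0 p - Rop f2 p))"
        by (simp add: fun_eq_iff algebra_simps)
      show ?thesis unfolding eq eq2
        using thnorm_add[OF Lip_diff[OF MM_Lip MM_Lip, OF R1(1) g1M] Lip_diff[OF MM_Lip MM_Lip, OF g0M R1(2)]]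
          thnorm_sub_comm[OF MM_Lip MM_Lip, OF g0M R1(2)] by simp
    qed
    also have "\<dots> = dd g1 (Rop f1) + dd g0 (Rop f2)"
      unfolding dd_def using R1 g1M g0M thnorm_sub_comm MM_Lip by simp
    also have "\<dots> < \<epsilon>" using f1 f2 by simp
    finally show ?thesis using fM fn by blast
  qed
  define K0 where "K0 = 4 * real k / r + 1"
  have K0: "K0 > 0"
  proof -
    have "4 * real k / r \<ge> 0" using r(1) by simp
    thus ?thesis unfolding K0_def by linarith
  qed
  have "\<exists>f\<in>MM. thnorm adj \<theta> f \<le> K0 * thnorm adj \<theta> g \<and> thnorm adj \<theta> (\<lambda>p. Rop f p - g p) < \<epsilon>"
    if g: "g \<in> MM" and e: "\<epsilon> > 0" for g \<epsilon>
  proof (cases "thnorm adj \<theta> g = 0")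
    case True
    have "thnorm adj \<theta> (\<lambda>p. Rop (\<lambda>p. 0) p - g p) = thnorm adj \<theta> (\<lambda>p. (-1) * g p)" by (simp add: Rop_0)
    also have "\<dots> = 0" using thnorm_scale[OF MM_Lip[OF g], of "-1"] True by simp
    finally show ?thesis using MM_0 e thnorm_0 True by (intro bexI[of _ "\<lambda>p. 0"]) auto
  next
    case False
    define t where "t = thnorm adj \<theta> g"
    have t: "t > 0" using False thnorm_nonneg[OF MM_Lip[OF g]] unfolding t_def by simp
    define c where "c = r / (2 * t)"
    have c: "c > 0" unfolding c_def using t r by simp
    define g' where "g' = (\<lambda>p. complex_of_real c * g p)"
    have g'M: "g' \<in> MM" unfolding g'_def using MM_scale g by blast
    have "thnorm adj \<theta> g' = cmod (complex_of_real c) * t" unfolding g'_def t_def by (rule thnorm_scale[OF MM_Lip[OF g]])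
    also have "\<dots> = c * t" using c by simp
    also have "\<dots> = r / 2" unfolding c_def using t by simp
    finally have tg': "thnorm adj \<theta> g' = r / 2" .
    obtain f' where f': "f' \<in> MM" "thnorm adj \<theta> f' \<le> 2 * real k" "thnorm adj \<theta> (\<lambda>p. Rop f' p - g' p) < \<epsilon> * c"
      using small[OF g'M _ , of "\<epsilon> * c"] tg' r e c by auto
    define f where "f = (\<lambda>p. complex_of_real (1 / c) * f' p)"
    have fM: "f \<in> MM" unfolding f_def using MM_scale f' by blast
    have "thnorm adj \<theta> f = cmod (complex_of_real (1 / c)) * thnorm adj \<theta> f'"
      unfolding f_def by (rule thnorm_scale[OF MM_Lip[OF f'(1)]])
    also have "\<dots> = (1 / c) * thnorm adj \<theta> f'" using c by (simp add: norm_divide)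
    also have "\<dots> \<le> (1 / c) * (2 * real k)" using f' c by (intro mult_left_mono) auto
    also have "\<dots> = 4 * real k / r * t" unfolding c_def using t r by (simp add: field_simps)
    also have "\<dots> \<le> K0 * t" unfolding K0_def using t by (simp add: distrib_right)
    finally have fn: "thnorm adj \<theta> f \<le> K0 * thnorm adj \<theta> g" unfolding t_def .
    have Rf: "\<And>p. Rop f p = complex_of_real (1 / c) * Rop f' p" unfolding f_def by (rule Rop_scale)
    have eq: "(\<lambda>p. Rop f p - g p) = (\<lambda>p. complex_of_real (1 / c) * (Rop f' p - g' p))"
    proof
      fix p
      have gg: "complex_of_real (1 / c) * (complex_of_real c * g p) = g p" using c by simp
      show "Rop f p - g p = complex_of_real (1 / c) * (Rop f' p - g' p)"
        by (simp only: Rf g'_def right_diff_distrib gg)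
    qed
    have "thnorm adj \<theta> (\<lambda>p. Rop f p - g p) = cmod (complex_of_real (1 / c)) * thnorm adj \<theta> (\<lambda>p. Rop f' p - g' p)"
      unfolding eq by (rule thnorm_scale[OF Lip_diff[OF MM_Lip MM_Lip, OF Rop_MM[OF MM_Lip[OF f'(1)]] g'M]])
    also have "\<dots> = (1 / c) * thnorm adj \<theta> (\<lambda>p. Rop f' p - g' p)" using c by (simp add: norm_divide)
    also have "\<dots> < (1 / c) * (\<epsilon> * c)" using f' c by (intro mult_strict_left_mono) auto
    also have "\<dots> = \<epsilon>" using c by simp
    finally show ?thesis using fM fn by blast
  qed
  thus ?thesis using K0 by blast
qed

end


context grth begin

lemma norm_le_thnorm: "f \<in> Lip adj \<theta> \<Longrightarrow> p \<in> P \<Longrightarrow> norm (f p) \<le> thnorm adj \<theta> f"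
  using supnorm_ge[of f p] supnorm_le_thnorm[of f] Lip_iff by (meson order_trans)

lemma solve:
  assumes K0: "K0 > 0"
    and ap: "\<forall>g\<in>MM. \<forall>\<epsilon>>0. \<exists>f\<in>MM. thnorm adj \<theta> f \<le> K0 * thnorm adj \<theta> g \<and> thnorm adj \<theta> (\<lambda>p. Rop f p - g p) < \<epsilon>"
    and g: "g \<in> MM"
  shows "\<exists>F\<in>Lip adj \<theta>. (\<forall>p\<in>P. Rop F p = g p) \<and> thnorm adj \<theta> F \<le> 4 * K0 * thnorm adj \<theta> g"
proof (cases "thnorm adj \<theta> g = 0")
  case True
  have "\<forall>p\<in>P. Rop (\<lambda>p. 0) p = g p" using thnorm_zero[OF MM_Lip[OF g] True] by (simp add: Rop_0)
  thus ?thesis using zero_Lip thnorm_0 True by (intro bexI[of _ "\<lambda>p. 0"]) auto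
next
  case False
  define t where "t = thnorm adj \<theta> g"
  have t: "t > 0" using False thnorm_nonneg[OF MM_Lip[OF g]] unfolding t_def by simp
  define Pn where "Pn n s = (fst s \<in> MM \<and> snd s \<in> MM \<and> thnorm adj \<theta> (fst s) \<le> (1/2)^n * t \<and>
      thnorm adj \<theta> (snd s) \<le> K0 * thnorm adj \<theta> (fst s) \<and>
      thnorm adj \<theta> (\<lambda>p. Rop (snd s) p - fst s p) \<le> (1/2)^(Suc n) * t \<and> (n = 0 \<longrightarrow> fst s = g))"
    for n :: nat and s :: "('v path \<Rightarrow> complex) \<times> ('v path \<Rightarrow> complex)"
  define Qn where "Qn n s s' = (fst s' = (\<lambda>p. fst s p - Rop (snd s) p))"
    for n :: nat and s s' :: "('v path \<Rightarrow> complex) \<times> ('v path \<Rightarrow> complex)"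
  have base: "\<exists>s. Pn 0 s"
  proof -
    obtain f where f: "f \<in> MM" "thnorm adj \<theta> f \<le> K0 * thnorm adj \<theta> g" "thnorm adj \<theta> (\<lambda>p. Rop f p - g p) < t / 2"
      using ap g t by (meson half_gt_zero)
    thus ?thesis unfolding Pn_def t_def using g by (intro exI[of _ "(g, f)"]) auto
  qed
  have step: "\<exists>s'. Pn (Suc n) s' \<and> Qn n s s'" if "Pn n s" for n s
  proof -
    have s: "fst s \<in> MM" "snd s \<in> MM" "thnorm adj \<theta> (\<lambda>p. Rop (snd s) p - fst s p) \<le> (1/2)^(Suc n) * t"
      using that unfolding Pn_def by auto
    define g' where "g' = (\<lambda>p. fst s p - Rop (snd s) p)"
    have g'M: "g' \<in> MM" unfolding g'_def using MM_diff s Rop_MM MM_Lip by blast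
    have "thnorm adj \<theta> g' = thnorm adj \<theta> (\<lambda>p. Rop (snd s) p - fst s p)"
      unfolding g'_def by (rule thnorm_sub_comm[OF MM_Lip MM_Lip, OF s(1) Rop_MM[OF MM_Lip[OF s(2)]]])
    hence tg': "thnorm adj \<theta> g' \<le> (1/2)^(Suc n) * t" using s by simp
    have "(1/2::real)^(Suc (Suc n)) * t > 0" using t by simp
    then obtain f where f: "f \<in> MM" "thnorm adj \<theta> f \<le> K0 * thnorm adj \<theta> g'"
      "thnorm adj \<theta> (\<lambda>p. Rop f p - g' p) < (1/2)^(Suc (Suc n)) * t"
      using ap g'M by blast
    show ?thesis unfolding Pn_def Qn_def using g'M f tg' by (intro exI[of _ "(g', f)"]) (auto simp: g'_def)
  qed
  obtain s where s: "\<And>n. Pn n (s n) \<and> Qn n (s n) (s (Suc n))"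
    using dependent_nat_choice[of Pn Qn, OF base step] by blast
  define G where "G n = fst (s n)" for n
  define Fn where "Fn n = snd (s n)" for n
  have GM: "G n \<in> MM" and FM: "Fn n \<in> MM" and Gb: "thnorm adj \<theta> (G n) \<le> (1/2)^n * t"
    and Fb0: "thnorm adj \<theta> (Fn n) \<le> K0 * thnorm adj \<theta> (G n)" for n
    using s[of n] unfolding Pn_def G_def Fn_def by auto
  have G0: "G 0 = g" using s[of 0] unfolding Pn_def G_def by auto
  have GS: "G (Suc n) p = G n p - Rop (Fn n) p" for n p
    using s[of n] unfolding Qn_def G_def Fn_def by auto
  have Fb: "thnorm adj \<theta> (Fn n) \<le> K0 * t * (1/2)^n" for n
    using Fb0[of n] Gb[of n] K0 by (smt (verit) mult.commute mult.left_commute mult_left_mono)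
  define b where "b n = K0 * t * (1/2::real)^n" for n
  have sb: "summable b" unfolding b_def by (intro summable_mult summable_geometric) simp
  have sumb: "suminf b = 2 * K0 * t" unfolding b_def
    using suminf_mult[of "\<lambda>n. (1/2::real)^n" "K0 * t"] suminf_geometric[of "1/2::real"] summable_geometric[of "1/2::real"]
    by simp
  have pb: "norm (Fn n p) \<le> b n" if "p \<in> P" for n p
    using norm_le_thnorm[OF MM_Lip[OF FM] that] Fb unfolding b_def by (meson order_trans)
  have lb: "norm (Fn n p - Fn n p') \<le> b n * d p p'" if pp: "p \<in> P" "p' \<in> P" "p 0 = p' 0" for n p p'
  proof -
    have "norm (Fn n p - Fn n p') \<le> L1 adj \<theta> (Fn n) * d p p'"
      using L1_lip[OF _ pp] MM_Lip[OF FM] Lip_iff by blast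
    also have "\<dots> \<le> b n * d p p'"
      using L1_le_thnorm[OF MM_Lip[OF FM]] Fb d_nonneg unfolding b_def
      by (intro mult_right_mono) (auto intro: order_trans)
    finally show ?thesis .
  qed
  define F where "F p = (\<Sum>n. Fn n p)" for p
  have sF: "summable (\<lambda>n. Fn n p)" if "p \<in> P" for p using sum_bound(1)[OF pb[OF that] sb] .
  have Fa: "norm (F p) \<le> 2 * K0 * t" if "p \<in> P" for p
    unfolding F_def using sum_bound(2)[OF pb[OF that] sb] sumb by simp
  have Fl: "norm (F p - F p') \<le> (2 * K0 * t) * d p p'" if pp: "p \<in> P" "p' \<in> P" "p 0 = p' 0" for p p'
  proof -
    have "F p - F p' = (\<Sum>n. Fn n p - Fn n p')" unfolding F_def
      using sF[OF pp(1)] sF[OF pp(2)] by (rule suminf_diff)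
    also have "norm \<dots> \<le> (\<Sum>n. b n * d p p')" using lb[OF pp] by (intro sum_bound(2) summable_mult2 sb)
    also have "\<dots> = 2 * K0 * t * d p p'" using suminf_mult2[OF sb, of "d p p'"] sumb by simp
    finally show ?thesis .
  qed
  have b0: "0 \<le> 2 * K0 * t" using K0 t by simp
  note LB = Lip_by_bounds[of F "2 * K0 * t" "2 * K0 * t", OF Fa Fl b0]
  have FL: "F \<in> Lip adj \<theta>" by (rule LB(1))
  have Fn_: "thnorm adj \<theta> F \<le> 2 * K0 * t + 2 * K0 * t" by (rule LB(2))
  have eq: "Rop F p = g p" if p: "p \<in> P" for p
  proof -
    have "T F p = (\<Sum>e0\<in>pred (p 0). \<Sum>n. Fn n (case_nat e0 p))" unfolding Tr_eq F_def ..
    also have "\<dots> = (\<Sum>n. \<Sum>e0\<in>pred (p 0). Fn n (case_nat e0 p))"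
      using sF cons_path[OF p] by (intro suminf_sum[symmetric]) auto
    also have "\<dots> = (\<Sum>n. T (Fn n) p)" unfolding Tr_eq ..
    finally have TF: "T F p = (\<Sum>n. T (Fn n) p)" .
    have sT: "summable (\<lambda>n. T (Fn n) p)"
      unfolding Tr_eq using sF cons_path[OF p] by (intro summable_sum) auto
    have "(\<lambda>n. complex_of_real rho * Fn n p - T (Fn n) p) sums (complex_of_real rho * F p - T F p)"
      unfolding TF F_def by (intro sums_diff sums_mult summable_sums sF p sT)
    moreover have "(\<lambda>n. complex_of_real rho * Fn n p - T (Fn n) p) = (\<lambda>n. G n p - G (Suc n) p)"
      using p by (simp add: GS Rop_def fun_eq_iff)
    moreover have "(\<lambda>n. G n p) \<longlonglongrightarrow> 0"
    proof -
      have l: "(\<lambda>n. (1/2::real)^n * t) \<longlonglongrightarrow> 0 * t" by (intro tendsto_mult LIMSEQ_power_zero tendsto_const) simp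
      have "norm (G n p) \<le> (1/2)^n * t" for n
        using norm_le_thnorm[OF MM_Lip[OF GM] p] Gb by (meson order_trans)
      hence ev: "\<forall>\<^sub>F n in sequentially. norm (G n p) \<le> (1/2)^n * t" by simp
      show ?thesis using Lim_null_comparison[OF ev] l by simp
    qed
    hence "(\<lambda>n. G n p - G (Suc n) p) sums (G 0 p - 0)" by (rule telescope_sums')
    ultimately have "complex_of_real rho * F p - T F p = G 0 p" by (simp add: sums_iff)
    thus ?thesis using p G0 unfolding Rop_def by simp
  qed
  show ?thesis using FL eq Fn_ unfolding t_def by (intro bexI[of _ F]) auto
qed

lemma inv_bound:
  assumes sp: "complex_of_real rho \<notin> spectrum_Lip adj \<theta>"
  shows "\<exists>K>0. \<forall>g\<in>Lip adj \<theta>. \<forall>f\<in>Lip adj \<theta>. (\<forall>p\<in>P. complex_of_real rho * f p - T f p = g p) \<longrightarrow>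
            supnorm adj f \<le> K * thnorm adj \<theta> g"
proof -
  obtain K0 where K0: "K0 > 0" and ap: "\<forall>g\<in>MM. \<forall>\<epsilon>>0. \<exists>f\<in>MM. thnorm adj \<theta> f \<le> K0 * thnorm adj \<theta> g \<and>
            thnorm adj \<theta> (\<lambda>p. Rop f p - g p) < \<epsilon>" using approx[OF sp] by blast
  note inj = spec_facts(1)[OF sp]
  have "supnorm adj f \<le> 4 * K0 * thnorm adj \<theta> g"
    if g: "g \<in> Lip adj \<theta>" and f: "f \<in> Lip adj \<theta>" and e: "\<forall>p\<in>P. complex_of_real rho * f p - T f p = g p" for g f
  proof -
    obtain F where F: "F \<in> Lip adj \<theta>" "\<forall>p\<in>P. Rop F p = rs g p" "thnorm adj \<theta> F \<le> 4 * K0 * thnorm adj \<theta> (rs g)"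
      using solve[OF K0 ap rs_MM[OF g]] by blast
    have h: "(\<lambda>p. f p - F p) \<in> Lip adj \<theta>" using f F by (intro Lip_diff)
    have "\<forall>p\<in>P. complex_of_real rho * (f p - F p) - T (\<lambda>p. f p - F p) p = 0"
    proof
      fix p assume p: "p \<in> P"
      have "complex_of_real rho * (f p - F p) - T (\<lambda>p. f p - F p) p =
         (complex_of_real rho * f p - T f p) - (complex_of_real rho * F p - T F p)"
        by (simp add: T_diff algebra_simps)
      also have "\<dots> = 0" using e F(2) p unfolding Rop_def rs_def by simp
      finally show "complex_of_real rho * (f p - F p) - T (\<lambda>p. f p - F p) p = 0" .
    qed
    hence "\<forall>p\<in>P. f p - F p = 0" using bspec[OF inj h] by (rule mp[rotated])
    hence "supnorm adj f = supnorm adj F" by (intro supnorm_cong) simp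
    also have "\<dots> \<le> thnorm adj \<theta> F" by (rule supnorm_le_thnorm[OF F(1)])
    also have "\<dots> \<le> 4 * K0 * thnorm adj \<theta> g" using F(3) by (simp add: rs_th)
    finally show ?thesis .
  qed
  thus ?thesis using K0 by (intro exI[of _ "4 * K0"]) auto
qed

end


context grth begin

definition Aop :: "('v edge \<Rightarrow> real) \<Rightarrow> 'v edge \<Rightarrow> real" where "Aop u e = (\<Sum>e0\<in>pred e. u e0)"
definition lift :: "('v edge \<Rightarrow> real) \<Rightarrow> 'v path \<Rightarrow> complex" where "lift u = (\<lambda>p. complex_of_real (u (p 0)))"

lemma Aop_pow1: "(Aop ^^ n) (\<lambda>_. 1) e = real (Nn adj n e)"
proof (induction n arbitrary: e)
  case 0 thus ?case by simp
next
  case (Suc n) thus ?case by (simp add: Aop_def Nn_Suc)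
qed

lemma Aop_mono: "(\<And>e. e \<in> edges adj \<Longrightarrow> u e \<le> v e) \<Longrightarrow> Aop u e \<le> Aop v e"
  unfolding Aop_def using pred_sub by (intro sum_mono) blast
lemma Aop_scale: "Aop (\<lambda>e. c * u e) e = c * Aop u e"
  unfolding Aop_def by (simp add: sum_distrib_left)
lemma Aop_nonneg: "(\<And>e. e \<in> edges adj \<Longrightarrow> 0 \<le> u e) \<Longrightarrow> 0 \<le> Aop u e"
  unfolding Aop_def using pred_sub by (intro sum_nonneg) blast

lemma Aop_pow_bound: "(\<And>e. e \<in> edges adj \<Longrightarrow> \<bar>u e\<bar> \<le> M) \<Longrightarrow> e \<in> edges adj \<Longrightarrow>
   \<bar>(Aop ^^ n) u e\<bar> \<le> real (Nn adj n e) * M"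
proof (induction n arbitrary: e)
  case 0 thus ?case by simp
next
  case (Suc n)
  have "\<bar>(Aop ^^ Suc n) u e\<bar> = \<bar>\<Sum>e0\<in>pred e. (Aop ^^ n) u e0\<bar>" by (simp add: Aop_def)
  also have "\<dots> \<le> (\<Sum>e0\<in>pred e. \<bar>(Aop ^^ n) u e0\<bar>)" by (rule sum_abs)
  also have "\<dots> \<le> (\<Sum>e0\<in>pred e. real (Nn adj n e0) * M)"
    using Suc.IH[OF Suc.prems(1)] pred_sub by (intro sum_mono) blast
  also have "\<dots> = real (Nn adj (Suc n) e) * M" by (simp add: Nn_Suc sum_distrib_right)
  finally show ?case .
qed

lemma Aop_pow_nonneg: "(\<And>e. e \<in> edges adj \<Longrightarrow> 0 \<le> u e) \<Longrightarrow> e \<in> edges adj \<Longrightarrow> 0 \<le> (Aop ^^ n) u e"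
proof (induction n arbitrary: e)
  case 0 thus ?case by simp
next
  case (Suc n) thus ?case by (simp add: Aop_nonneg)
qed

lemma lift_T: "p \<in> P \<Longrightarrow> T (lift u) p = lift (Aop u) p"
  unfolding Tr_eq lift_def Aop_def by simp

lemma lift_Lip: assumes "\<And>e. e \<in> edges adj \<Longrightarrow> \<bar>u e\<bar> \<le> M"
  shows "lift u \<in> Lip adj \<theta>" and "thnorm adj \<theta> (lift u) \<le> M"
proof -
  have a: "norm (lift u p) \<le> M" if "p \<in> P" for p using assms[OF paths_edge[OF that]] by (simp add: lift_def)
  have b: "norm (lift u p - lift u p') \<le> 0 * d p p'" if "p \<in> P" "p' \<in> P" "p 0 = p' 0" for p p'
    using that by (simp add: lift_def)
  have z: "(0::real) \<le> 0" by simp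
  show "lift u \<in> Lip adj \<theta>" by (rule Lip_by_bounds(1)[OF a b z])
  have "thnorm adj \<theta> (lift u) \<le> M + 0" by (rule Lip_by_bounds(2)[OF a b z])
  thus "thnorm adj \<theta> (lift u) \<le> M" by simp
qed

lemma lift_ge: assumes "\<And>e. e \<in> edges adj \<Longrightarrow> \<bar>u e\<bar> \<le> M" and e: "e \<in> edges adj"
  shows "\<bar>u e\<bar> \<le> supnorm adj (lift u)"
proof -
  have "lift u \<in> Lip adj \<theta>" by (rule lift_Lip(1)[OF assms(1)])
  hence "bnd (lift u)" by (simp add: Lip_iff)
  from supnorm_ge[OF this, of "mkpath e"] show ?thesis using mkpath[OF e] by (simp add: lift_def)
qed

lemma rho_spec: "complex_of_real rho \<in> spectrum_Lip adj \<theta>"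
proof (rule ccontr)
  assume sp: "complex_of_real rho \<notin> spectrum_Lip adj \<theta>"
  obtain K where K: "K > 0" and KB: "\<forall>g\<in>Lip adj \<theta>. \<forall>f\<in>Lip adj \<theta>. (\<forall>p\<in>P. complex_of_real rho * f p - T f p = g p) \<longrightarrow>
            supnorm adj f \<le> K * thnorm adj \<theta> g" using inv_bound[OF sp] by blast
  define x where "x = min (1 / (4 * K)) (rho / 2)"
  have r1: "rho \<ge> 1" by (rule rho_ge1)
  have x0: "x > 0" unfolding x_def using K r1 by simp
  have xK: "K * x \<le> 1 / 4" unfolding x_def using K by (simp add: min_def field_simps)
  have xr: "x \<le> rho / 2" unfolding x_def by simp
  define l1 where "l1 = rho + x / 2"
  define lam where "lam = l1 - x"
  have l1r: "l1 > rho" unfolding l1_def using x0 by simp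
  have l10: "l1 > 0" using l1r r1 by simp
  have lam0: "lam > 0" unfolding lam_def l1_def using xr r1 by simp
  have lamr: "lam < rho" unfolding lam_def l1_def using x0 by simp
  define S1 where "S1 = (\<Sum>n. real (Rn adj n) / l1 ^ Suc n)"
  have sS1: "summable (\<lambda>n. real (Rn adj n) / l1 ^ Suc n)"
  proof -
    have "(\<lambda>n. real (Rn adj n) / l1 ^ n / l1) = (\<lambda>n. real (Rn adj n) / l1 ^ Suc n)"
      by (simp add: divide_divide_eq_left mult.commute)
    thus ?thesis using summable_divide[OF summable_Rn[OF l1r], of l1] by simp
  qed
  define Pop where "Pop u e = (\<Sum>n. (Aop ^^ n) u e / l1 ^ Suc n)" for u e
  have Pop_sum: "summable (\<lambda>n. (Aop ^^ n) u e / l1 ^ Suc n)"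
    if u: "\<forall>e'\<in>edges adj. \<bar>u e'\<bar> \<le> M" and e: "e \<in> edges adj" and M: "M \<ge> 0" for u e M
  proof -
    have "norm ((Aop ^^ n) u e / l1 ^ Suc n) \<le> M * (real (Rn adj n) / l1 ^ Suc n)" for n
    proof -
      have "\<bar>(Aop ^^ n) u e\<bar> \<le> real (Nn adj n e) * M" using u e by (intro Aop_pow_bound) auto
      also have "\<dots> \<le> real (Rn adj n) * M" using Nn_le_Rn[OF e] M by (intro mult_right_mono) auto
      finally show ?thesis using l10 by (simp add: abs_divide divide_right_mono mult.commute)
    qed
    from sum_bound(1)[OF this summable_mult[OF sS1, of M]] show ?thesis .
  qed
  have Pop_eq: "l1 * Pop u e - Aop (Pop u) e = u e"
    if u: "\<forall>e'\<in>edges adj. \<bar>u e'\<bar> \<le> M" and e: "e \<in> edges adj" and M: "M \<ge> 0" for u e M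
  proof -
    have "Aop (Pop u) e = (\<Sum>e0\<in>pred e. \<Sum>n. (Aop ^^ n) u e0 / l1 ^ Suc n)" unfolding Aop_def Pop_def ..
    also have "\<dots> = (\<Sum>n. \<Sum>e0\<in>pred e. (Aop ^^ n) u e0 / l1 ^ Suc n)"
    proof (rule suminf_sum[symmetric])
      fix e0 assume "e0 \<in> pred e"
      hence "e0 \<in> edges adj" using pred_sub by blast
      thus "summable (\<lambda>n. (Aop ^^ n) u e0 / l1 ^ Suc n)" using Pop_sum u M by blast
    qed
    also have "\<dots> = (\<Sum>n. (Aop ^^ Suc n) u e / l1 ^ Suc n)" by (simp add: Aop_def sum_divide_distrib)
    finally have A: "Aop (Pop u) e = (\<Sum>n. (Aop ^^ Suc n) u e / l1 ^ Suc n)" .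
    define b where "b n = (Aop ^^ n) u e / l1 ^ n" for n
    have lb: "(\<lambda>n. l1 * ((Aop ^^ n) u e / l1 ^ Suc n)) = b" unfolding b_def using l10 by (auto simp: fun_eq_iff)
    have bs: "summable b" using summable_mult[OF Pop_sum[OF u e M], of l1] lb by simp
    have "l1 * Pop u e = (\<Sum>n. l1 * ((Aop ^^ n) u e / l1 ^ Suc n))" unfolding Pop_def
      by (rule suminf_mult[symmetric, OF Pop_sum[OF u e M]])
    also have "\<dots> = suminf b" using lb by simp
    also have "\<dots> = b 0 + (\<Sum>n. b (Suc n))" using suminf_split_head[OF bs] by simp
    also have "\<dots> = u e + Aop (Pop u) e" unfolding A b_def by simp
    finally show ?thesis by simp
  qed
  have Pop_nonneg: "0 \<le> Pop u e"
    if u: "\<forall>e'\<in>edges adj. \<bar>u e'\<bar> \<le> M" and u0: "\<forall>e'\<in>edges adj. 0 \<le> u e'"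
      and e: "e \<in> edges adj" and M: "M \<ge> 0" for u e M
    unfolding Pop_def using Pop_sum[OF u e M] Aop_pow_nonneg[of u, OF bspec[OF u0] e] l10
    by (intro suminf_nonneg) auto
  have Pop_crude: "\<bar>Pop u e\<bar> \<le> M * S1"
    if u: "\<forall>e'\<in>edges adj. \<bar>u e'\<bar> \<le> M" and e: "e \<in> edges adj" and M: "M \<ge> 0" for u e M
  proof -
    have "norm ((Aop ^^ n) u e / l1 ^ Suc n) \<le> M * (real (Rn adj n) / l1 ^ Suc n)" for n
    proof -
      have "\<bar>(Aop ^^ n) u e\<bar> \<le> real (Nn adj n e) * M" using u e by (intro Aop_pow_bound) auto
      also have "\<dots> \<le> real (Rn adj n) * M" using Nn_le_Rn[OF e] M by (intro mult_right_mono) auto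
      finally show ?thesis using l10 by (simp add: abs_divide divide_right_mono mult.commute)
    qed
    from sum_bound(2)[OF this summable_mult[OF sS1, of M]]
    show ?thesis unfolding Pop_def S1_def using suminf_mult[OF sS1, of M] by simp
  qed
  have Pop_bound: "\<bar>Pop u e\<bar> \<le> 2 * K * M"
    if u: "\<forall>e'\<in>edges adj. \<bar>u e'\<bar> \<le> M" and e: "e \<in> edges adj" and M: "M \<ge> 0" for u e M
  proof -
    define v where "v = Pop u"
    have vb: "\<bar>v e'\<bar> \<le> M * S1" if "e' \<in> edges adj" for e' unfolding v_def
      using Pop_crude u M that by blast
    define sv where "sv = supnorm adj (lift v)"
    have vsv: "\<bar>v e\<bar> \<le> sv" if "e \<in> edges adj" for e unfolding sv_def by (rule lift_ge[OF vb that])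
    have sv0: "sv \<ge> 0" using vsv[OF e] by (meson abs_ge_zero order_trans)
    define w where "w e = u e + (rho - l1) * v e" for e
    have wb: "\<bar>w e\<bar> \<le> M + (l1 - rho) * sv" if "e \<in> edges adj" for e
    proof -
      have "\<bar>w e\<bar> \<le> \<bar>u e\<bar> + \<bar>rho - l1\<bar> * \<bar>v e\<bar>" unfolding w_def by (metis abs_mult abs_triangle_ineq)
      also have "\<dots> \<le> M + (l1 - rho) * sv" using bspec[OF u that] vsv[OF that] l1r
        by (intro add_mono mult_mono) auto
      finally show ?thesis .
    qed
    have eqn: "complex_of_real rho * lift v p - T (lift v) p = lift w p" if p: "p \<in> P" for p
    proof -
      have "l1 * v (p 0) - Aop v (p 0) = u (p 0)" unfolding v_def by (rule Pop_eq[OF u paths_edge[OF p] M])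
      hence "rho * v (p 0) - Aop v (p 0) = w (p 0)" unfolding w_def by (simp add: algebra_simps)
      thus ?thesis using lift_T[OF p] unfolding lift_def by (simp flip: of_real_mult of_real_diff)
    qed
    have wL: "lift w \<in> Lip adj \<theta>" by (rule lift_Lip(1)[OF wb])
    have vL: "lift v \<in> Lip adj \<theta>" by (rule lift_Lip(1)[OF vb])
    have eqn': "\<forall>p\<in>P. complex_of_real rho * lift v p - T (lift v) p = lift w p" using eqn by blast
    have "sv \<le> K * thnorm adj \<theta> (lift w)"
      unfolding sv_def by (rule mp[OF bspec[OF bspec[OF KB wL] vL] eqn'])
    also have "\<dots> \<le> K * (M + (l1 - rho) * sv)" using K lift_Lip(2)[OF wb] by (intro mult_left_mono) auto
    also have "\<dots> = K * M + (K * x / 2) * sv" unfolding l1_def by (simp add: algebra_simps)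
    also have "\<dots> \<le> K * M + (1/2) * sv" using xK sv0 M by (intro add_mono mult_right_mono) auto
    finally have "sv \<le> 2 * K * M" by simp
    thus ?thesis using vsv[OF e] unfolding v_def by simp
  qed
  define U where "U k = (Pop ^^ k) (\<lambda>_. 1)" for k
  have U: "0 \<le> U k e \<and> U k e \<le> (2 * K) ^ k" if "e \<in> edges adj" for k e
    using that
  proof (induction k arbitrary: e)
    case 0 thus ?case by (simp add: U_def)
  next
    case (Suc k)
    have ub: "\<forall>e\<in>edges adj. \<bar>U k e\<bar> \<le> (2 * K) ^ k" using Suc.IH by fastforce
    have u0: "\<forall>e\<in>edges adj. 0 \<le> U k e" using Suc.IH by blast
    have "U (Suc k) e = Pop (U k) e" by (simp add: U_def)
    moreover have "0 \<le> Pop (U k) e" using Pop_nonneg[OF ub u0 Suc.prems] K by simp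
    moreover have "\<bar>Pop (U k) e\<bar> \<le> 2 * K * (2 * K) ^ k" using Pop_bound[OF ub Suc.prems] K by simp
    ultimately show ?case by simp
  qed
  have Ueq: "l1 * U (Suc k) e - Aop (U (Suc k)) e = U k e" if e: "e \<in> edges adj" for k e
  proof -
    have ub: "\<forall>e\<in>edges adj. \<bar>U k e\<bar> \<le> (2 * K) ^ k" using U by fastforce
    show ?thesis using Pop_eq[OF ub e] K by (simp add: U_def)
  qed
  have geo: "x ^ k * (2 * K) ^ k \<le> (1/2) ^ k" for k
  proof -
    have "x ^ k * (2 * K) ^ k = (2 * K * x) ^ k" by (simp add: power_mult_distrib mult_ac)
    also have "\<dots> \<le> (1/2) ^ k" using xK x0 K by (intro power_mono) auto
    finally show ?thesis .
  qed
  have bnd1: "norm (x ^ k * U (Suc k) e) \<le> 2 * K * (1/2) ^ k" if e: "e \<in> edges adj" for k e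
  proof -
    have "norm (x ^ k * U (Suc k) e) = x ^ k * U (Suc k) e" using U[OF e] x0 by simp
    also have "\<dots> \<le> x ^ k * (2 * K) ^ Suc k" using U[OF e, of "Suc k"] x0 by (intro mult_left_mono) auto
    also have "\<dots> = 2 * K * (x ^ k * (2 * K) ^ k)" by simp
    also have "\<dots> \<le> 2 * K * (1/2) ^ k" using geo K by (intro mult_left_mono) auto
    finally show ?thesis .
  qed
  have bnd0: "norm (x ^ k * U k e) \<le> (1/2) ^ k" if e: "e \<in> edges adj" for k e
  proof -
    have "norm (x ^ k * U k e) = x ^ k * U k e" using U[OF e] x0 by simp
    also have "\<dots> \<le> x ^ k * (2 * K) ^ k" using U[OF e] x0 by (intro mult_left_mono) auto
    finally show ?thesis using geo[of k] by simp
  qed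
  have sg: "summable (\<lambda>k. 2 * K * (1/2::real) ^ k)" by (intro summable_mult summable_geometric) simp
  have sg0: "summable (\<lambda>k. (1/2::real) ^ k)" by (intro summable_geometric) simp
  define w where "w e = (\<Sum>k. x ^ k * U (Suc k) e)" for e
  have sw: "summable (\<lambda>k. x ^ k * U (Suc k) e)" if "e \<in> edges adj" for e
    using sum_bound(1)[OF bnd1[OF that] sg] .
  have sw0: "summable (\<lambda>k. x ^ k * U k e)" if "e \<in> edges adj" for e
    using sum_bound(1)[OF bnd0[OF that] sg0] .
  have w0: "0 \<le> w e" if "e \<in> edges adj" for e
    unfolding w_def using sw[OF that] U[OF that] x0 by (intro suminf_nonneg) auto
  have wb: "w e \<le> 4 * K" if "e \<in> edges adj" for e
  proof -
    have "norm (w e) \<le> (\<Sum>k. 2 * K * (1/2::real) ^ k)" unfolding w_def by (rule sum_bound(2)[OF bnd1[OF that] sg])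
    also have "\<dots> = 4 * K" using suminf_mult[OF sg0, of "2 * K"] suminf_geometric[of "1/2::real"] by simp
    finally show ?thesis by simp
  qed
  have weq: "Aop w e = lam * w e - 1" if e: "e \<in> edges adj" for e
  proof -
    have "Aop w e = (\<Sum>e0\<in>pred e. \<Sum>k. x ^ k * U (Suc k) e0)" unfolding Aop_def w_def ..
    also have "\<dots> = (\<Sum>k. \<Sum>e0\<in>pred e. x ^ k * U (Suc k) e0)"
      using sw pred_sub by (intro suminf_sum[symmetric]) blast
    also have "\<dots> = (\<Sum>k. x ^ k * Aop (U (Suc k)) e)" by (simp add: Aop_def sum_distrib_left)
    also have "\<dots> = (\<Sum>k. l1 * (x ^ k * U (Suc k) e) - x ^ k * U k e)"
    proof (rule arg_cong[where f=suminf], rule ext)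
      fix k
      have a: "Aop (U (Suc k)) e = l1 * U (Suc k) e - U k e" using Ueq[OF e, of k] by simp
      show "x ^ k * Aop (U (Suc k)) e = l1 * (x ^ k * U (Suc k) e) - x ^ k * U k e"
        unfolding a by (simp add: algebra_simps)
    qed
    also have "\<dots> = l1 * w e - (\<Sum>k. x ^ k * U k e)" unfolding w_def
      using sw[OF e] sw0[OF e] by (simp add: suminf_diff[symmetric] suminf_mult summable_mult)
    also have "(\<Sum>k. x ^ k * U k e) = 1 + x * w e"
    proof -
      have "(\<Sum>k. x ^ Suc k * U (Suc k) e) = (\<Sum>k. x ^ k * U k e) - x ^ 0 * U 0 e"
        by (rule suminf_split_head[OF sw0[OF e]])
      moreover have "(\<Sum>k. x ^ Suc k * U (Suc k) e) = x * w e" unfolding w_def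
        using suminf_mult[OF sw[OF e], of x] by (simp add: mult_ac)
      ultimately show ?thesis by (simp add: U_def)
    qed
    finally show ?thesis unfolding lam_def by (simp add: algebra_simps)
  qed
  have Nb: "real (Nn adj n e) \<le> lam ^ Suc n * w e" if "e \<in> edges adj" for n e
    using that
  proof (induction n arbitrary: e)
    case 0
    have "0 \<le> Aop w e" using w0 by (intro Aop_nonneg)
    thus ?case using weq[OF 0] by simp
  next
    case (Suc n)
    have "real (Nn adj (Suc n) e) = (\<Sum>e0\<in>pred e. real (Nn adj n e0))" by (simp add: Nn_Suc)
    also have "\<dots> \<le> (\<Sum>e0\<in>pred e. lam ^ Suc n * w e0)" using Suc.IH pred_sub by (intro sum_mono) blast
    also have "\<dots> = lam ^ Suc n * Aop w e" by (simp add: Aop_def sum_distrib_left)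
    also have "\<dots> \<le> lam ^ Suc n * (lam * w e)" using weq[OF Suc.prems] lam0 by (intro mult_left_mono) auto
    finally show ?case by (simp add: mult_ac)
  qed
  have "real (Rn adj n) \<le> (4 * K * lam) * lam ^ n" for n
  proof -
    obtain e where e: "e \<in> edges adj" "Rn adj n = Nn adj n e" using Rn_attained by blast
    have "real (Rn adj n) \<le> lam ^ Suc n * w e" using Nb[OF e(1)] e(2) by simp
    also have "\<dots> \<le> lam ^ Suc n * (4 * K)" using wb[OF e(1)] lam0 by (intro mult_left_mono) auto
    finally show ?thesis by (simp add: mult_ac)
  qed
  moreover have "0 < 4 * K * lam" using K lam0 by simp
  ultimately have "rho \<le> lam" using rho_le_of_bound[OF lam0, of "4 * K * lam"] by blast
  thus False using lamr by simp
qed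

end


theorem mainTheorem6:
  fixes adj :: "'v \<Rightarrow> 'v \<Rightarrow> bool" and \<theta> :: real
  assumes "graph_ok adj"
    and "\<forall>v. deg adj v \<ge> 2"
    and "\<exists>D. \<forall>v. deg adj v \<le> D"
    and "0 < \<theta>" and "\<theta> < 1"
  shows "(\<forall>n\<ge>1. (\<forall>f \<in> Lip adj \<theta>. (Tr adj ^^ n) f \<in> Lip adj \<theta>) \<and>
                 opnorm_on (Lip adj \<theta>) (thnorm adj \<theta>) (Tr adj ^^ n) = real (Rn adj n) \<and>
                 opnorm_on (Lip adj \<theta>) (supnorm adj) (Tr adj ^^ n) = real (Rn adj n)) \<and>
         (\<exists>\<rho>. (\<lambda>n. root n (real (Rn adj n))) \<longlonglongrightarrow> \<rho> \<and>
              spectral_radius_Lip adj \<theta> = \<rho> \<and> \<rho> \<le> real (qmax adj) \<and>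
              (\<forall>\<epsilon>>0. \<exists>N. \<forall>n\<ge>N. \<forall>f \<in> Lip adj \<theta>.
                 thnorm adj \<theta> ((Tr adj ^^ n) f)
                   \<le> (\<rho> + \<epsilon>) ^ n * (\<theta> ^ n * L1 adj \<theta> f + supnorm adj f)))"
proof -
  interpret G: grth adj \<theta>
    using assms unfolding grth_def grth_axioms_def grph_def by blast
  have part1: "\<forall>n\<ge>1. (\<forall>f \<in> Lip adj \<theta>. (Tr adj ^^ n) f \<in> Lip adj \<theta>) \<and>
                 opnorm_on (Lip adj \<theta>) (thnorm adj \<theta>) (Tr adj ^^ n) = real (Rn adj n) \<and>
                 opnorm_on (Lip adj \<theta>) (supnorm adj) (Tr adj ^^ n) = real (Rn adj n)"
    using G.Tpow_Lip(1) G.opnorm_th G.opnorm_sup by blast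
  have sr: "spectral_radius_Lip adj \<theta> = G.rho"
    unfolding spectral_radius_Lip_def
  proof (rule cSup_eq_maximum)
    have "norm (complex_of_real G.rho) = G.rho" using G.rho_ge1 by simp
    thus "G.rho \<in> norm ` spectrum_Lip adj \<theta>" using G.rho_spec by (metis image_eqI)
  next
    fix y assume "y \<in> norm ` spectrum_Lip adj \<theta>"
    then obtain z where z: "z \<in> spectrum_Lip adj \<theta>" "y = norm z" by blast
    show "y \<le> G.rho"
    proof (rule ccontr)
      assume "\<not> y \<le> G.rho"
      hence "norm z > G.rho" using z by simp
      thus False using G.big_not_spec z by blast
    qed
  qed
  have q: "G.rho \<le> real (qmax adj)" using G.rho_le_qq unfolding G.qq_def .
  show ?thesis using part1 G.rho_lim sr q G.final_ineq by blast
qed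


end
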